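(* Suppose $n$ is an even integer with $0\leq n<\min\{t_1,t_2,t_3\}$. Then the $\mathfrak{BI}$-module $\mathscr M_n$ is isomorphic to $W\oplus W$, where $W=O_n\big(k_2+k_3+\tfrac{n+1}{2},\,-k_1-k_3-\tfrac{n+1}{2},\,-k_1-k_2-\tfrac{n+1}{2}\big)^{(1,-1)}$. Moreover, if $k_1,k_2,k_3\geq 0$, then $W$ is irreducible and is isomorphic to $O_n\big(k_2+k_3+\tfrac{n+1}{2},\,k_1+k_3+\tfrac{n+1}{2},\,k_1+k_2+\tfrac{n+1}{2}\big)$.
   Context: Fix real numbers $k_1,k_2,k_3$. For $i=1,2,3$ let $R_i$ be the operator on functions on $\mathbb R^3$ replacing $x_i$ by $-x_i$, and let $T_i$ be the Dunkl operator $T_if=\frac{\partial f}{\partial x_i}+k_i\frac{f-R_if}{x_i}$. Let $\sigma_1=\begin{pmatrix}0&1\\1&0\end{pmatrix}$, $\sigma_2=\begin{pmatrix}0&-\sqrt{-1}\\ \sqrt{-1}&0\end{pmatrix}$, $\sigma_3=\begin{pmatrix}1&0\\0&-1\end{pmatrix}$, and let $e_i$ act on $\mathbb C^2$ by $\sigma_i$. Tensor products are over $\mathbb R$; $\mathbb R[x_1,x_2,x_3]_n$ denotes homogeneous polynomials of degree $n$. Let $\mathbf D=e_1\otimes T_1+e_2\otimes T_2+e_3\otimes T_3$ and $\mathscr M_n=\ker(\mathbf D|_{\mathbb C^2\otimes\mathbb R[x_1,x_2,x_3]_n})$. For $i=1,2,3$ set $t_i=-2k_i$ if $2k_i$ is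 an odd negative integer, and $t_i=\infty$ otherwise. The universal Bannai–Ito algebra $\mathfrak{BI}$ is the unital associative $\mathbb C$-algebra generated by $X,Y,Z$ with relations saying that $\kappa=\{X,Y\}-Z$, $\lambda=\{Y,Z\}-X$, $\mu=\{Z,X\}-Y$ commute with $X,Y,Z$ ($\{A,B\}=AB+BA$). $\mathscr M_n$ is a $\mathfrak{BI}$-module via $X=(\sqrt{-1}\,e_1\otimes(x_3T_2-x_2T_3)+\tfrac12)R_2R_3+k_2R_3+k_3R_2$, $Y=(\sqrt{-1}\,e_2\otimes(x_1T_3-x_3T_1)+\tfrac12)R_1R_3+k_3R_1+k_1R_3$, $Z=(\sqrt{-1}\,e_3\otimes(x_2T_1-x_1T_2)+\tfrac12)R_1R_2+k_1R_2+k_2R_1$, operators composed right to left, $R_i$ acting on the polynomial factor. Twisting: for a $\mathfrak{BI}$-module $V$ and an algebra automorphism $\varepsilon$ of $\mathfrak{BI}$, $V^\varepsilon$ is $V$ with new action $x\cdot v=\varepsilon(x)v$. The automorphism $(1,-1)$ is $X\mapsto X$, $Y\mapsto -Y$, $Z\mapsto -Z$. For $a,b,c\in\mathbb C$ and even $d\geq0$, $O_d(a,b,c)$ is the $\mathfrak{BI}$-module $\mathbb C^{d+1}$ in which, w.r.t. a basis $v_0,\dots,v_d$, $X$ acts by the lower bidiagonal matrix with diagonal $(\theta_0,\dots,\theta_d)$ and subdiagonal entries all $1$, $Y$ by the upper bidiagonal matrix with diagonal $(\theta^*_0,\dots,\theta^*_d)$ and superdiagonal $(\varphi_1,\dots,\varphi_d)$,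 and $Z=\{X,Y\}-(2ab-c(d+1))$, where $\theta_i=\frac{(-1)^i(2a-d+2i)}{2}$, $\theta^*_i=\frac{(-1)^i(2b-d+2i)}{2}$, $\varphi_i=\frac{i(d+1-2i-2a-2b-2c)}{2}$ for $i$ even and $\varphi_i=\frac{(i-d-1)(d+1-2i-2a-2b+2c)}{2}$ for $i$ odd. *)

theory Defs
  imports Complex_Main "HOL-Library.Extended_Real"
begin

text \<open>A BI-module is represented concretely: a complex vector space given as a
subspace of coefficient functions 'i => complex, together with the actions of
the generators X, Y, Z.  Since BI is generated by X, Y, Z, a module
isomorphism is a linear bijection intertwining X, Y, Z, and a submodule is a
subspace invariant under X, Y, Z.\<close>

record 'i bimod =
  car :: "('i \<Rightarrow> complex) set"
  opX :: "('i \<Rightarrow> complex) \<Rightarrow> ('i \<Rightarrow> complex)"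
  opY :: "('i \<Rightarrow> complex) \<Rightarrow> ('i \<Rightarrow> complex)"
  opZ :: "('i \<Rightarrow> complex) \<Rightarrow> ('i \<Rightarrow> complex)"

definition lc :: "complex \<Rightarrow> ('i \<Rightarrow> complex) \<Rightarrow> complex \<Rightarrow> ('i \<Rightarrow> complex) \<Rightarrow> ('i \<Rightarrow> complex)" where
  "lc a u b w = (\<lambda>i. a * u i + b * w i)"

definition csubspace :: "('i \<Rightarrow> complex) set \<Rightarrow> bool" where
  "csubspace U \<longleftrightarrow> (\<lambda>_. 0) \<in> U \<and> (\<forall>u\<in>U. \<forall>w\<in>U. \<forall>a b. lc a u b w \<in> U)"

definition clinear_on :: "('i \<Rightarrow> complex) set \<Rightarrow> (('i \<Rightarrow> complex) \<Rightarrow> ('j \<Rightarrow> complex)) \<Rightarrow> bool" where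
  "clinear_on V f \<longleftrightarrow> (\<forall>u\<in>V. \<forall>w\<in>V. \<forall>a b. f (lc a u b w) = lc a (f u) b (f w))"

definition bi_iso :: "'i bimod \<Rightarrow> 'j bimod \<Rightarrow> bool" where
  "bi_iso M N \<longleftrightarrow> (\<exists>f. clinear_on (car M) f \<and> bij_betw f (car M) (car N) \<and>
     (\<forall>v\<in>car M. f (opX M v) = opX N (f v) \<and> f (opY M v) = opY N (f v)
                  \<and> f (opZ M v) = opZ N (f v)))"

definition bi_irreducible :: "'i bimod \<Rightarrow> bool" where
  "bi_irreducible M \<longleftrightarrow> car M \<noteq> {\<lambda>_. 0} \<and>
     (\<forall>U. U \<subseteq> car M \<and> csubspace U \<and>
          (\<forall>u\<in>U. opX M u \<in> U \<and> opY M u \<in> U \<and> opZ M u \<in> U)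
          \<longrightarrow> U = {\<lambda>_. 0} \<or> U = car M)"

definition dsum :: "'i bimod \<Rightarrow> 'i bimod \<Rightarrow> (bool \<times> 'i) bimod" where
  "dsum M N = \<lparr> car = {w. (\<lambda>i. w (True, i)) \<in> car M \<and> (\<lambda>i. w (False, i)) \<in> car N},
     opX = (\<lambda>w (b, i). if b then opX M (\<lambda>j. w (True, j)) i else opX N (\<lambda>j. w (False, j)) i),
     opY = (\<lambda>w (b, i). if b then opY M (\<lambda>j. w (True, j)) i else opY N (\<lambda>j. w (False, j)) i),
     opZ = (\<lambda>w (b, i). if b then opZ M (\<lambda>j. w (True, j)) i else opZ N (\<lambda>j. w (False, j)) i) \<rparr>"

text \<open>Twist by the automorphism (1,-1): X |-> X, Y |-> -Y, Z |-> -Z.\<close>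
definition twist_1m1 :: "'i bimod \<Rightarrow> 'i bimod" where
  "twist_1m1 M = \<lparr> car = car M, opX = opX M,
     opY = (\<lambda>v i. - opY M v i), opZ = (\<lambda>v i. - opZ M v i) \<rparr>"

text \<open>C^{d+1} is represented as functions nat => complex vanishing outside {0..d};
v_i is the i-th unit vector, and a vector u has coordinates u i.\<close>

definition Otheta :: "nat \<Rightarrow> complex \<Rightarrow> nat \<Rightarrow> complex" where
  "Otheta d a i = (-1) ^ i * (2 * a - of_nat d + 2 * of_nat i) / 2"

definition Ophi :: "nat \<Rightarrow> complex \<Rightarrow> complex \<Rightarrow> complex \<Rightarrow> nat \<Rightarrow> complex" where
  "Ophi d a b c i = (if even i
      then of_nat i * (of_nat d + 1 - 2 * of_nat i - 2 * a - 2 * b - 2 * c) / 2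
      else (of_nat i - of_nat d - 1) * (of_nat d + 1 - 2 * of_nat i - 2 * a - 2 * b + 2 * c) / 2)"

text \<open>X: lower bidiagonal, diagonal theta_i, subdiagonal 1, i.e. X v_i = theta_i v_i + v_(i+1).
  Y: upper bidiagonal, diagonal theta*_i, superdiagonal phi_1..phi_d, i.e.
  Y v_i = theta*_i v_i + phi_i v_(i-1).\<close>
definition OX :: "nat \<Rightarrow> complex \<Rightarrow> (nat \<Rightarrow> complex) \<Rightarrow> (nat \<Rightarrow> complex)" where
  "OX d a u = (\<lambda>i. if i \<le> d then Otheta d a i * u i + (if i \<ge> 1 then u (i - 1) else 0) else 0)"

definition OY :: "nat \<Rightarrow> complex \<Rightarrow> complex \<Rightarrow> complex \<Rightarrow> (nat \<Rightarrow> complex) \<Rightarrow> (nat \<Rightarrow> complex)" where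
  "OY d a b c u = (\<lambda>i. if i \<le> d then Otheta d b i * u i + (if i + 1 \<le> d then Ophi d a b c (i + 1) * u (i + 1) else 0) else 0)"

definition Omod :: "nat \<Rightarrow> complex \<Rightarrow> complex \<Rightarrow> complex \<Rightarrow> nat bimod" where
  "Omod d a b c = \<lparr> car = {u. \<forall>i>d. u i = 0},
     opX = OX d a, opY = OY d a b c,
     opZ = (\<lambda>u i. OX d a (OY d a b c u) i + OY d a b c (OX d a u) i
                   - (2 * a * b - c * (of_nat d + 1)) * u i) \<rparr>"

text \<open>A polynomial in x1,x2,x3 (with complex coefficients) is represented by its
coefficient function on exponent triples (a,b,c) <-> x1^a x2^b x3^c.  An element
of C^2 (x) R[x1,x2,x3] is a function (j, m) => complex, j in {0,1} the C^2
coordinate and m the monomial.\<close>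

type_synonym mono = "nat \<times> nat \<times> nat"
type_synonym cpoly = "mono \<Rightarrow> complex"
type_synonym spoly = "nat \<times> mono \<Rightarrow> complex"

fun ex :: "nat \<Rightarrow> mono \<Rightarrow> nat" where
  "ex i (a, b, c) = (if i = 1 then a else if i = 2 then b else c)"

fun incr :: "nat \<Rightarrow> mono \<Rightarrow> mono" where
  "incr i (a, b, c) = (if i = 1 then (a + 1, b, c) else if i = 2 then (a, b + 1, c) else (a, b, c + 1))"

fun decr :: "nat \<Rightarrow> mono \<Rightarrow> mono" where
  "decr i (a, b, c) = (if i = 1 then (a - 1, b, c) else if i = 2 then (a, b - 1, c) else (a, b, c - 1))"

fun total :: "mono \<Rightarrow> nat" where
  "total (a, b, c) = a + b + c"

definition pdx :: "nat \<Rightarrow> cpoly \<Rightarrow> cpoly" where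
  "pdx i q = (\<lambda>m. of_nat (ex i m + 1) * q (incr i m))"

definition refl :: "nat \<Rightarrow> cpoly \<Rightarrow> cpoly" where
  "refl i q = (\<lambda>m. (-1) ^ (ex i m) * q m)"

definition mulx :: "nat \<Rightarrow> cpoly \<Rightarrow> cpoly" where
  "mulx i q = (\<lambda>m. if ex i m = 0 then 0 else q (decr i m))"

text \<open>Division by x_i (exact on polynomials divisible by x_i, which is the only
  way it is used: on f - R_i f).\<close>
definition divx :: "nat \<Rightarrow> cpoly \<Rightarrow> cpoly" where
  "divx i q = (\<lambda>m. q (incr i m))"

definition dunkl :: "(nat \<Rightarrow> real) \<Rightarrow> nat \<Rightarrow> cpoly \<Rightarrow> cpoly" where
  "dunkl k i q = (\<lambda>m. pdx i q m + complex_of_real (k i) * divx i (\<lambda>m'. q m' - refl i q m') m)"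

text \<open>Pauli matrices sigma_i, entries indexed by row j, column l in {0,1}.\<close>
definition sigma :: "nat \<Rightarrow> nat \<Rightarrow> nat \<Rightarrow> complex" where
  "sigma i j l =
    (if j \<ge> 2 \<or> l \<ge> 2 then 0
     else if i = 1 then (if j \<noteq> l then 1 else 0)
     else if i = 2 then (if j = 0 \<and> l = 1 then - \<i> else if j = 1 \<and> l = 0 then \<i> else 0)
     else (if j \<noteq> l then 0 else if j = 0 then 1 else -1))"

definition pauli :: "nat \<Rightarrow> spoly \<Rightarrow> spoly" where
  "pauli i f = (\<lambda>(j, m). \<Sum>l<2. sigma i j l * f (l, m))"

definition lift :: "(cpoly \<Rightarrow> cpoly) \<Rightarrow> spoly \<Rightarrow> spoly" where
  "lift P f = (\<lambda>(j, m). P (\<lambda>m'. f (j, m')) m)"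

definition Dop :: "(nat \<Rightarrow> real) \<Rightarrow> spoly \<Rightarrow> spoly" where
  "Dop k f = (\<lambda>p. pauli 1 (lift (dunkl k 1) f) p + pauli 2 (lift (dunkl k 2) f) p
                 + pauli 3 (lift (dunkl k 3) f) p)"

definition Hn :: "nat \<Rightarrow> spoly set" where
  "Hn n = {f. \<forall>j m. (j \<ge> 2 \<or> total m \<noteq> n) \<longrightarrow> f (j, m) = 0}"

definition Mn :: "(nat \<Rightarrow> real) \<Rightarrow> nat \<Rightarrow> spoly set" where
  "Mn k n = {f \<in> Hn n. Dop k f = (\<lambda>_. 0)}"

text \<open>Generic form of X, Y, Z: for (i,j,l) = (1,2,3), (2,3,1), (3,1,2) respectively,
  (sqrt(-1) e_i (x) (x_l T_j - x_j T_l) + 1/2) R_j R_l + k_j R_l + k_l R_j.\<close>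
definition BIgen :: "(nat \<Rightarrow> real) \<Rightarrow> nat \<Rightarrow> nat \<Rightarrow> nat \<Rightarrow> spoly \<Rightarrow> spoly" where
  "BIgen k i j l f =
    (let g = lift (refl j) (lift (refl l) f);
         A = (\<lambda>q m. mulx l (dunkl k j q) m - mulx j (dunkl k l q) m)
     in (\<lambda>p. \<i> * pauli i (lift A g) p + g p / 2
             + complex_of_real (k j) * lift (refl l) f p
             + complex_of_real (k l) * lift (refl j) f p))"

definition Mmod :: "(nat \<Rightarrow> real) \<Rightarrow> nat \<Rightarrow> (nat \<times> mono) bimod" where
  "Mmod k n = \<lparr> car = Mn k n,
     opX = BIgen k 1 2 3,  \<comment> \<open>(sqrt(-1) e1 (x) (x3 T2 - x2 T3) + 1/2) R2 R3 + k2 R3 + k3 R2\<close>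
     opY = BIgen k 2 3 1,  \<comment> \<open>(sqrt(-1) e2 (x) (x1 T3 - x3 T1) + 1/2) R3 R1 + k3 R1 + k1 R3\<close>
     opZ = BIgen k 3 1 2 \<rparr>"

definition tpar :: "real \<Rightarrow> ereal" where
  "tpar x = (if \<exists>m::int. odd m \<and> m < 0 \<and> 2 * x = of_int m then ereal (- 2 * x) else \<infinity>)"

end

theory Submission
  imports Defs
begin


definition br :: "(nat \<Rightarrow> real) \<Rightarrow> nat \<Rightarrow> nat \<Rightarrow> complex" where
  "br k i m = of_nat m + complex_of_real (k i) * (1 - (-1) ^ m)"

lemma ex_incr: "i \<in> {1,2,3} \<Longrightarrow> ex i (incr i m) = ex i m + 1"
  by (cases m) auto

lemma dunkl_eq: "i \<in> {1,2,3} \<Longrightarrow> dunkl k i q m = br k i (ex i m + 1) * q (incr i m)"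
  unfolding dunkl_def pdx_def divx_def refl_def br_def
  by (simp add: ex_incr algebra_simps)

lemma Dop0: "Dop k f (0, (a, b, c)) = br k 1 (a+1) * f (1, (a+1,b,c)) - \<i> * br k 2 (b+1) * f (1, (a,b+1,c)) + br k 3 (c+1) * f (0,(a,b,c+1))"
  unfolding Dop_def pauli_def lift_def
  by (simp add: dunkl_eq sigma_def lessThan_Suc numeral_2_eq_2)

lemma Dop1: "Dop k f (1, (a, b, c)) = br k 1 (a+1) * f (0, (a+1,b,c)) + \<i> * br k 2 (b+1) * f (0, (a,b+1,c)) - br k 3 (c+1) * f (1,(a,b,c+1))"
  unfolding Dop_def pauli_def lift_def
  by (simp add: dunkl_eq sigma_def lessThan_Suc numeral_2_eq_2)

lemma Dop2: "j \<ge> 2 \<Longrightarrow> Dop k f (j, m) = 0"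
  unfolding Dop_def pauli_def lift_def
  by (cases m) (simp add: sigma_def lessThan_Suc numeral_2_eq_2)



definition z0 :: "nat \<Rightarrow> complex \<Rightarrow> complex \<Rightarrow> complex \<Rightarrow> nat \<Rightarrow> complex" where
  "z0 d a b c i = 2 * Otheta d a i * Otheta d b i + Ophi d a b c i + Ophi d a b c (Suc i)
     - (2*a*b - c*(of_nat d+1))"

lemma Ophi0[simp]: "Ophi d a b c 0 = 0" by (simp add: Ophi_def)
lemma Ophi_top[simp]: "even d \<Longrightarrow> Ophi d a b c (Suc d) = 0" by (simp add: Ophi_def)

lemma Otheta_Suc: "Otheta d a i + Otheta d a (Suc i) = - ((-1)^i)"
  by (cases "even i") (simp_all add: Otheta_def minus_one_power_iff field_simps)

lemma z0_A: "z0 d a b c i + z0 d a b c (Suc i) + 1 = 0"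
  by (cases "even i") (simp_all add: z0_def Otheta_def Ophi_def minus_one_power_iff field_simps)

lemma z0_B: "2 * Otheta d a i * z0 d a b c i - (-1)^i * Ophi d a b c (Suc i) + (-1)^i * Ophi d a b c i
   - Otheta d b i = 2*c*a - b*(of_nat d+1)"
  by (cases "even i") (simp_all add: z0_def Otheta_def Ophi_def minus_one_power_iff field_simps)

lemma z0_C: "2 * Otheta d b i * z0 d a b c i + (-1)^(Suc i) * Ophi d a b c (Suc i) + (-1)^i * Ophi d a b c i
   - Otheta d a i = 2*b*c - a*(of_nat d+1)"
  by (cases "even i") (simp_all add: z0_def Otheta_def Ophi_def minus_one_power_iff field_simps)


definition carO :: "nat \<Rightarrow> (nat \<Rightarrow> complex) set" where
  "carO d = {u. \<forall>i>d. u i = 0}"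

definition ZO :: "nat \<Rightarrow> complex \<Rightarrow> complex \<Rightarrow> complex \<Rightarrow> (nat \<Rightarrow> complex) \<Rightarrow> (nat \<Rightarrow> complex)" where
  "ZO d a b c u = (\<lambda>i. OX d a (OY d a b c u) i + OY d a b c (OX d a u) i - (2 * a * b - c * (of_nat d + 1)) * u i)"

lemma car_Omod: "car (Omod d a b c) = carO d" by (simp add: Omod_def carO_def)
lemma opX_Omod: "opX (Omod d a b c) = OX d a" by (simp add: Omod_def)
lemma opY_Omod: "opY (Omod d a b c) = OY d a b c" by (simp add: Omod_def)
lemma opZ_Omod: "opZ (Omod d a b c) = ZO d a b c" by (simp add: Omod_def ZO_def fun_eq_iff)

lemma OX_out: "d < i \<Longrightarrow> OX d a u i = 0" by (simp add: OX_def)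
lemma OY_out: "d < i \<Longrightarrow> OY d a b c u i = 0" by (simp add: OY_def)
lemma ZO_out: "u \<in> carO d \<Longrightarrow> d < i \<Longrightarrow> ZO d a b c u i = 0"
  by (simp add: ZO_def OX_def OY_def carO_def)
lemma OX_car: "OX d a u \<in> carO d" by (simp add: OX_def carO_def)
lemma OY_car: "OY d a b c u \<in> carO d" by (simp add: OY_def carO_def)
lemma ZO_car: "u \<in> carO d \<Longrightarrow> ZO d a b c u \<in> carO d" by (simp add: ZO_out carO_def)

lemma OX_0: "OX d a u 0 = Otheta d a 0 * u 0" by (simp add: OX_def)
lemma OX_Suc: "Suc j \<le> d \<Longrightarrow> OX d a u (Suc j) = Otheta d a (Suc j) * u (Suc j) + u j"
  by (simp add: OX_def)
lemma OY_at: "u \<in> carO d \<Longrightarrow> i \<le> d \<Longrightarrow> OY d a b c u i = Otheta d b i * u i + Ophi d a b c (Suc i) * u (Suc i)"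
  by (cases "i = d") (auto simp: OY_def carO_def)

lemma phi_OX: "even d \<Longrightarrow> i \<le> d \<Longrightarrow>
   Ophi d a' b c (Suc i) * OX d a u (Suc i) = Ophi d a' b c (Suc i) * (Otheta d a (Suc i) * u (Suc i) + u i)"
  by (cases "i = d") (auto simp: OX_def)

lemma th_Suc_eq: "Otheta d a (Suc i) = - ((-1::complex)^i) - Otheta d a i"
  using Otheta_Suc[of d a i] by (simp add: algebra_simps)

lemma ZO_at: assumes "even d" "u \<in> carO d" "i \<le> d"
  shows "ZO d a b c u i = z0 d a b c i * u i + (if 1 \<le> i then (-1)^i * u (i - 1) else 0)
          - (-1)^i * Ophi d a b c (Suc i) * u (Suc i)"
proof (cases i)
  case 0
  have A: "OX d a (OY d a b c u) 0 = Otheta d a 0 * (Otheta d b 0 * u 0 + Ophi d a b c (Suc 0) * u (Suc 0))"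
    using OY_at[OF assms(2), of 0] by (simp add: OX_0)
  have B: "OY d a b c (OX d a u) 0 = Otheta d b 0 * (Otheta d a 0 * u 0) + Ophi d a b c (Suc 0) * (Otheta d a (Suc 0) * u (Suc 0) + u 0)"
    using OY_at[OF OX_car, of 0 d] phi_OX[OF assms(1), of 0] assms(3) by (simp add: OX_0)
  show ?thesis unfolding 0 ZO_def A B z0_def by (simp add: th_Suc_eq algebra_simps)
next
  case (Suc j)
  have A: "OX d a (OY d a b c u) (Suc j) = Otheta d a (Suc j) * (Otheta d b (Suc j) * u (Suc j) + Ophi d a b c (Suc (Suc j)) * u (Suc (Suc j)))
     + (Otheta d b j * u j + Ophi d a b c (Suc j) * u (Suc j))"
    using OY_at[OF assms(2), of "Suc j"] OY_at[OF assms(2), of j] assms(3) Suc by (simp add: OX_Suc)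
  have B: "OY d a b c (OX d a u) (Suc j) = Otheta d b (Suc j) * (Otheta d a (Suc j) * u (Suc j) + u j) + Ophi d a b c (Suc (Suc j)) * (Otheta d a (Suc (Suc j)) * u (Suc (Suc j)) + u (Suc j))"
    using OY_at[OF OX_car, of "Suc j" d] phi_OX[OF assms(1), of "Suc j"] assms(3) Suc by (simp add: OX_Suc)
  show ?thesis unfolding Suc ZO_def A B z0_def by (simp add: th_Suc_eq algebra_simps)
qed


lemma ZO_0: "even d \<Longrightarrow> u \<in> carO d \<Longrightarrow> ZO d a b c u 0 = z0 d a b c 0 * u 0 - Ophi d a b c (Suc 0) * u (Suc 0)"
  using ZO_at[of d u 0 a b c] by simp

lemma ZO_Suc: "even d \<Longrightarrow> u \<in> carO d \<Longrightarrow> Suc j \<le> d \<Longrightarrow>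
   ZO d a b c u (Suc j) = z0 d a b c (Suc j) * u (Suc j) - (-1)^j * u j + (-1)^j * (Ophi d a b c (Suc (Suc j)) * u (Suc (Suc j)))"
  using ZO_at[of d u "Suc j" a b c] by simp

lemma phi_ZO: assumes "even d" "u \<in> carO d" "i \<le> d"
  shows "Ophi d a b c (Suc i) * ZO d a b c u (Suc i) = Ophi d a b c (Suc i) *
    (z0 d a b c (Suc i) * u (Suc i) - (-1)^i * u i + (-1)^i * (Ophi d a b c (Suc (Suc i)) * u (Suc (Suc i))))"
proof (cases "i = d")
  case True then show ?thesis using assms by simp
next
  case False then show ?thesis using assms ZO_Suc[of d u i a b c] by simp
qed

lemma phi_OY: assumes "even d" "u \<in> carO d" "i \<le> d"
  shows "Ophi d a b c (Suc i) * OY d a b c u (Suc i) = Ophi d a b c (Suc i) *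
    (Otheta d b (Suc i) * u (Suc i) + Ophi d a b c (Suc (Suc i)) * u (Suc (Suc i)))"
proof (cases "i = d")
  case True then show ?thesis using assms by simp
next
  case False then show ?thesis using assms OY_at[of u d "Suc i" a b c] by simp
qed

lemma solveT: fixes X T M :: complex shows "X - T = M \<Longrightarrow> T = X - M"
  by (simp add: eq_diff_eq diff_eq_eq)

lemma solveA: fixes x y :: complex shows "x + y + 1 = 0 \<Longrightarrow> x = - 1 - y"
proof -
  assume h: "x + y + 1 = 0"
  have "x = (x + y + 1) - 1 - y" by simp
  then show ?thesis using h by simp
qed

lemma z0_A': "z0 d a b c i = - 1 - z0 d a b c (Suc i)"
  using z0_A[of d a b c i] by (rule solveA)

lemma z0_B': "Otheta d b i = 2 * Otheta d a i * z0 d a b c i - (-1)^i * Ophi d a b c (Suc i) + (-1)^i * Ophi d a b c i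
   - (2*c*a - b*(of_nat d+1))"
  using z0_B[of d a i b c] by (rule solveT)

lemma z0_C': "Otheta d a i = 2 * Otheta d b i * z0 d a b c i + (-1)^(Suc i) * Ophi d a b c (Suc i) + (-1)^i * Ophi d a b c i
   - (2*b*c - a*(of_nat d+1))"
  using z0_C[of d b i a c] by (rule solveT)

lemma mu_rel:
  assumes "even d" "u \<in> carO d"
  shows "ZO d a b c (OX d a u) i + OX d a (ZO d a b c u) i - OY d a b c u i = (2*c*a - b*(of_nat d+1)) * u i"
proof (cases "i \<le> d")
  case False then show ?thesis using assms
    by (simp add: ZO_out OX_car OX_out OY_out carO_def)
next
  case True
  note X = OX_car[of d a u]
  show ?thesis
  proof (cases i)
    case 0
    have A: "ZO d a b c (OX d a u) 0 = z0 d a b c 0 * (Otheta d a 0 * u 0) - Ophi d a b c (Suc 0) * (Otheta d a (Suc 0) * u (Suc 0) + u 0)"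
      using ZO_0[OF assms(1) X] phi_OX[OF assms(1), of 0 a b c a u] by (simp add: OX_0)
    have B: "OX d a (ZO d a b c u) 0 = Otheta d a 0 * (z0 d a b c 0 * u 0 - Ophi d a b c (Suc 0) * u (Suc 0))"
      using ZO_0[OF assms] by (simp add: OX_0)
    have C: "OY d a b c u 0 = Otheta d b 0 * u 0 + Ophi d a b c (Suc 0) * u (Suc 0)"
      using OY_at[OF assms(2), of 0] by simp
    show ?thesis unfolding 0 A B C
      by (simp add: z0_B'[of d b 0 a c] th_Suc_eq[of d a] algebra_simps)
  next
    case (Suc i1)
    show ?thesis
    proof (cases i1)
      case 0
      have d1: "Suc 0 \<le> d" using True Suc 0 by simp
      have A: "ZO d a b c (OX d a u) (Suc 0) = z0 d a b c (Suc 0) * (Otheta d a (Suc 0) * u (Suc 0) + u 0)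
          - (Otheta d a 0 * u 0) + (Ophi d a b c (Suc (Suc 0)) * (Otheta d a (Suc (Suc 0)) * u (Suc (Suc 0)) + u (Suc 0)))"
        using ZO_Suc[OF assms(1) X d1] phi_OX[OF assms(1), of "Suc 0" a b c a u] d1 by (simp add: OX_0 OX_Suc)
      have B: "OX d a (ZO d a b c u) (Suc 0) = Otheta d a (Suc 0) * (z0 d a b c (Suc 0) * u (Suc 0) - u 0 + (Ophi d a b c (Suc (Suc 0)) * u (Suc (Suc 0))))
          + (z0 d a b c 0 * u 0 - Ophi d a b c (Suc 0) * u (Suc 0))"
        using ZO_0[OF assms] ZO_Suc[OF assms d1] d1 by (simp add: OX_Suc)
      have C: "OY d a b c u (Suc 0) = Otheta d b (Suc 0) * u (Suc 0) + Ophi d a b c (Suc (Suc 0)) * u (Suc (Suc 0))"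
        using OY_at[OF assms(2) d1] by simp
      show ?thesis unfolding Suc 0 A B C
        by (simp add: z0_B'[of d b "Suc 0" a c] z0_A'[of d a b c 0] th_Suc_eq[of d a] algebra_simps)
    next
      case (Suc j)
      have d2: "Suc (Suc j) \<le> d" and d1: "Suc j \<le> d" using True \<open>i = Suc i1\<close> Suc by simp_all
      have A: "ZO d a b c (OX d a u) (Suc (Suc j)) = z0 d a b c (Suc (Suc j)) * (Otheta d a (Suc (Suc j)) * u (Suc (Suc j)) + u (Suc j))
          - (-1)^(Suc j) * (Otheta d a (Suc j) * u (Suc j) + u j)
          + (-1)^(Suc j) * (Ophi d a b c (Suc (Suc (Suc j))) * (Otheta d a (Suc (Suc (Suc j))) * u (Suc (Suc (Suc j))) + u (Suc (Suc j))))"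
        using ZO_Suc[OF assms(1) X d2] phi_OX[OF assms(1), of "Suc (Suc j)" a b c a u] d2 d1 by (simp add: OX_Suc)
      have B: "OX d a (ZO d a b c u) (Suc (Suc j)) = Otheta d a (Suc (Suc j)) * (z0 d a b c (Suc (Suc j)) * u (Suc (Suc j)) - (-1)^(Suc j) * u (Suc j)
              + (-1)^(Suc j) * (Ophi d a b c (Suc (Suc (Suc j))) * u (Suc (Suc (Suc j)))))
          + (z0 d a b c (Suc j) * u (Suc j) - (-1)^j * u j + (-1)^j * (Ophi d a b c (Suc (Suc j)) * u (Suc (Suc j))))"
        using ZO_Suc[OF assms d1] ZO_Suc[OF assms d2] d2 by (simp add: OX_Suc)
      have C: "OY d a b c u (Suc (Suc j)) = Otheta d b (Suc (Suc j)) * u (Suc (Suc j)) + Ophi d a b c (Suc (Suc (Suc j))) * u (Suc (Suc (Suc j)))"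
        using OY_at[OF assms(2) d2] by simp
      show ?thesis unfolding \<open>i = Suc i1\<close> Suc A B C
        by (simp add: z0_B'[of d b "Suc (Suc j)" a c] z0_A'[of d a b c "Suc j"] th_Suc_eq[of d a] algebra_simps)
    qed
  qed
qed


lemma lam_rel:
  assumes "even d" "u \<in> carO d"
  shows "OY d a b c (ZO d a b c u) i + ZO d a b c (OY d a b c u) i - OX d a u i = (2*b*c - a*(of_nat d+1)) * u i"
proof (cases "i \<le> d")
  case False then show ?thesis using assms
    by (simp add: ZO_out OY_car OX_out OY_out carO_def)
next
  case True
  note Y = OY_car[of d a b c u]
  note Z = ZO_car[OF assms(2), of a b c]
  show ?thesis
  proof (cases i)
    case 0
    have A: "OY d a b c (ZO d a b c u) 0 = Otheta d b 0 * (z0 d a b c 0 * u 0 - Ophi d a b c (Suc 0) * u (Suc 0))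
        + Ophi d a b c (Suc 0) * (z0 d a b c (Suc 0) * u (Suc 0) - u 0 + Ophi d a b c (Suc (Suc 0)) * u (Suc (Suc 0)))"
      using OY_at[OF Z, of 0] phi_ZO[OF assms, of 0 a b c] ZO_0[OF assms] by simp
    have B: "ZO d a b c (OY d a b c u) 0 = z0 d a b c 0 * (Otheta d b 0 * u 0 + Ophi d a b c (Suc 0) * u (Suc 0))
        - Ophi d a b c (Suc 0) * (Otheta d b (Suc 0) * u (Suc 0) + Ophi d a b c (Suc (Suc 0)) * u (Suc (Suc 0)))"
      using ZO_0[OF assms(1) Y] phi_OY[OF assms, of 0 a b c] OY_at[OF assms(2), of 0] by simp
    have C: "OX d a u 0 = Otheta d a 0 * u 0" by (simp add: OX_0)
    show ?thesis unfolding 0 A B C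
      by (simp add: z0_C'[of d a 0 b c] z0_A'[of d a b c 0] th_Suc_eq[of d b] algebra_simps)
  next
    case (Suc j)
    have d1: "Suc j \<le> d" using True Suc by simp
    have A: "OY d a b c (ZO d a b c u) (Suc j) = Otheta d b (Suc j) * (z0 d a b c (Suc j) * u (Suc j) - (-1)^j * u j + (-1)^j * (Ophi d a b c (Suc (Suc j)) * u (Suc (Suc j))))
        + Ophi d a b c (Suc (Suc j)) * (z0 d a b c (Suc (Suc j)) * u (Suc (Suc j)) - (-1)^(Suc j) * u (Suc j) + (-1)^(Suc j) * (Ophi d a b c (Suc (Suc (Suc j))) * u (Suc (Suc (Suc j)))))"
      using OY_at[OF Z d1] phi_ZO[OF assms d1, of a b c] ZO_Suc[OF assms d1] by simp
    have B: "ZO d a b c (OY d a b c u) (Suc j) = z0 d a b c (Suc j) * (Otheta d b (Suc j) * u (Suc j) + Ophi d a b c (Suc (Suc j)) * u (Suc (Suc j)))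
        - (-1)^j * (Otheta d b j * u j + Ophi d a b c (Suc j) * u (Suc j))
        + (-1)^j * (Ophi d a b c (Suc (Suc j)) * (Otheta d b (Suc (Suc j)) * u (Suc (Suc j)) + Ophi d a b c (Suc (Suc (Suc j))) * u (Suc (Suc (Suc j)))))"
      using ZO_Suc[OF assms(1) Y d1] phi_OY[OF assms d1, of a b c] OY_at[OF assms(2) d1] OY_at[OF assms(2), of j] d1 by simp
    have C: "OX d a u (Suc j) = Otheta d a (Suc j) * u (Suc j) + u j" using d1 by (simp add: OX_Suc)
    show ?thesis unfolding Suc A B C
      by (simp add: z0_C'[of d a "Suc j" b c] z0_A'[of d a b c "Suc j"] th_Suc_eq[of d b] algebra_simps)
  qed
qed



definition ev :: "nat \<Rightarrow> nat \<Rightarrow> complex" where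
  "ev j = (\<lambda>i. if i = j then 1 else 0)"

lemma lc_apply: "lc p f q g i = p * f i + q * g i" by (simp add: lc_def)

lemma OX_lc: "OX d a (lc p f q g) = lc p (OX d a f) q (OX d a g)"
  by (auto simp: OX_def lc_def fun_eq_iff algebra_simps)
lemma OY_lc: "OY d a b c (lc p f q g) = lc p (OY d a b c f) q (OY d a b c g)"
  by (auto simp: OY_def lc_def fun_eq_iff algebra_simps)

lemma OX_sum: "OX d a (\<lambda>x. \<Sum>j\<in>S. cf j * g j x) = (\<lambda>x. \<Sum>j\<in>S. cf j * OX d a (g j) x)"
  by (auto simp: OX_def fun_eq_iff algebra_simps sum_distrib_left sum.distrib)
lemma OY_sum: "OY d a b c (\<lambda>x. \<Sum>j\<in>S. cf j * g j x) = (\<lambda>x. \<Sum>j\<in>S. cf j * OY d a b c (g j) x)"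
  by (auto simp: OY_def fun_eq_iff algebra_simps sum_distrib_left sum.distrib)

lemma ev_car: "j \<le> n \<Longrightarrow> ev j \<in> carO n" by (simp add: ev_def carO_def)

lemma sum_delta1: "finite S \<Longrightarrow> (\<Sum>l\<in>S. (if l = j then 1 else 0) * g l) = (if j \<in> S then g j else (0::complex))"
proof -
  assume "finite S"
  have "(\<Sum>l\<in>S. (if l = j then 1 else 0) * g l) = (\<Sum>l\<in>S. if l = j then g l else 0)"
    by (rule sum.cong) auto
  also have "\<dots> = (if j \<in> S then g j else 0)" using \<open>finite S\<close> by (simp add: sum.delta)
  finally show ?thesis .
qed

lemma sum_delta2: "finite S \<Longrightarrow> (\<Sum>l\<in>S. g l * (if j = l then 1 else 0)) = (if j \<in> S then g j else (0::complex))"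
proof -
  assume "finite S"
  have "(\<Sum>l\<in>S. g l * (if j = l then 1 else 0)) = (\<Sum>l\<in>S. if l = j then g l else 0)"
    by (rule sum.cong) auto
  also have "\<dots> = (if j \<in> S then g j else 0)" using \<open>finite S\<close> by (simp add: sum.delta)
  finally show ?thesis .
qed

lemma sum_delta3: "finite S \<Longrightarrow> (\<Sum>l\<in>S. cc * (if l = j then 1 else 0) * g l) = (if j \<in> S then cc * g j else (0::complex))"
proof -
  assume "finite S"
  have "(\<Sum>l\<in>S. cc * (if l = j then 1 else 0) * g l) = (\<Sum>l\<in>S. if l = j then cc * g l else 0)"
    by (rule sum.cong) auto
  also have "\<dots> = (if j \<in> S then cc * g j else 0)" using \<open>finite S\<close> by (simp add: sum.delta)
  finally show ?thesis .
qed

lemma basis_expand: "u \<in> carO n \<Longrightarrow> u = (\<lambda>x. \<Sum>j\<le>n. u j * ev j x)"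
  by (auto simp: fun_eq_iff ev_def carO_def sum_delta2)

lemma lc_car: "f \<in> carO n \<Longrightarrow> g \<in> carO n \<Longrightarrow> lc p f q g \<in> carO n"
  by (simp add: carO_def lc_def)

fun aseq :: "nat \<Rightarrow> complex \<Rightarrow> (nat \<Rightarrow> complex) \<Rightarrow> nat \<Rightarrow> nat \<Rightarrow> complex" where
  "aseq n a y 0 = y"
| "aseq n a y (Suc j) = (\<lambda>i. OX n a (aseq n a y j) i - Otheta n a j * aseq n a y j i)"

lemma aseq_car: "y \<in> carO n \<Longrightarrow> aseq n a y j \<in> carO n"
  by (induction j) (auto simp: carO_def OX_def)

lemma aseq_A: "OX n a (aseq n a y j) = lc (Otheta n a j) (aseq n a y j) 1 (aseq n a y (Suc j))"
  by (simp add: lc_def fun_eq_iff)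

lemma aseq_low: "y \<in> carO n \<Longrightarrow> i < j \<Longrightarrow> aseq n a y j i = 0"
proof (induction j arbitrary: i)
  case 0 then show ?case by simp
next
  case (Suc j)
  note IH = Suc.IH[OF Suc.prems(1)]
  have cj: "aseq n a y j \<in> carO n" by (rule aseq_car[OF Suc.prems(1)])
  show ?case
  proof (cases "i < j")
    case True
    then have "aseq n a y j i = 0" "i \<ge> 1 \<Longrightarrow> aseq n a y j (i - 1) = 0" using IH by auto
    then show ?thesis by (simp add: OX_def)
  next
    case False
    then have ij: "i = j" using Suc.prems by simp
    have "i \<ge> 1 \<Longrightarrow> aseq n a y j (i - 1) = 0" using IH ij by auto
    then show ?thesis using ij cj by (auto simp: OX_def carO_def)
  qed
qed

lemma aseq_top: "y \<in> carO n \<Longrightarrow> aseq n a y (Suc n) = (\<lambda>_. 0)"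
proof
  fix i assume y: "y \<in> carO n"
  show "aseq n a y (Suc n) i = 0"
  proof (cases "i \<le> n")
    case True then show ?thesis using aseq_low[OF y, of i "Suc n" a] by simp
  next
    case False then show ?thesis using aseq_car[OF y, of a "Suc n"] by (simp add: carO_def)
  qed
qed

lemma A_ev: "j \<le> n \<Longrightarrow> OX n a (ev j) = (\<lambda>i. Otheta n a j * ev j i + (if j < n then ev (Suc j) i else 0))"
  by (auto simp: OX_def ev_def fun_eq_iff)

lemma A_ev': "j \<le> n \<Longrightarrow> OX n a (ev j) = lc (Otheta n a j) (ev j) 1 (if j < n then ev (Suc j) else (\<lambda>_. 0))"
  by (auto simp: OX_def ev_def fun_eq_iff lc_def)

lemma B_ev: "j \<le> n \<Longrightarrow> OY n a b c (ev j) = (\<lambda>i. Otheta n b j * ev j i + (if 1 \<le> j then Ophi n a b c j * ev (j - 1) i else 0))"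
  by (auto simp: OY_def ev_def fun_eq_iff)

definition hmap :: "nat \<Rightarrow> (nat \<Rightarrow> nat \<Rightarrow> complex) \<Rightarrow> (nat \<Rightarrow> complex) \<Rightarrow> (nat \<Rightarrow> complex)" where
  "hmap n ys u = (\<lambda>x. \<Sum>j\<le>n. u j * ys j x)"

lemma hmap_lc: "hmap n ys (lc p f q g) = lc p (hmap n ys f) q (hmap n ys g)"
  by (simp add: hmap_def lc_def fun_eq_iff algebra_simps sum.distrib sum_distrib_left)

lemma hmap_sum: "finite S \<Longrightarrow> hmap n ys (\<lambda>x. \<Sum>j\<in>S. cf j * g j x) = (\<lambda>x. \<Sum>j\<in>S. cf j * hmap n ys (g j) x)"
  by (simp add: hmap_def fun_eq_iff sum_distrib_left sum_distrib_right sum.swap[of _ S] mult.assoc)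

lemma hmap_0: "hmap n ys (\<lambda>_. 0) = (\<lambda>_. 0)" by (simp add: hmap_def)

lemma hmap_ev: "j \<le> n \<Longrightarrow> hmap n ys (ev j) = ys j"
  by (simp add: hmap_def ev_def fun_eq_iff sum_delta1)

definition slin :: "((nat \<Rightarrow> complex) \<Rightarrow> (nat \<Rightarrow> complex)) \<Rightarrow> bool" where
  "slin T \<longleftrightarrow> (\<forall>(S::nat set) cf g. finite S \<longrightarrow> T (\<lambda>x. \<Sum>j\<in>S. cf j * g j x) = (\<lambda>x. \<Sum>j\<in>S. cf j * T (g j) x))"

lemma slin_OX: "slin (OX d a)" by (simp add: slin_def OX_sum)
lemma slin_OY: "slin (OY d a b c)" by (simp add: slin_def OY_sum)
lemma slin_neg: "slin T \<Longrightarrow> slin (\<lambda>v i. - T v i)"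
  by (simp add: slin_def sum_negf)
lemma slin_hmap: "slin (hmap n ys)" by (simp add: slin_def hmap_sum)

lemma intertwine:
  assumes "slin T" "slin T'" "\<And>j. j \<le> n \<Longrightarrow> hmap n ys (T (ev j)) = T' (ys j)" "u \<in> carO n"
  shows "hmap n ys (T u) = T' (hmap n ys u)"
proof -
  have "T u = (\<lambda>x. \<Sum>j\<le>n. u j * T (ev j) x)"
    using assms(1) basis_expand[OF assms(4)] unfolding slin_def by (metis finite_atMost)
  then have "hmap n ys (T u) = (\<lambda>x. \<Sum>j\<le>n. u j * hmap n ys (T (ev j)) x)"
    by (simp add: hmap_sum)
  also have "\<dots> = (\<lambda>x. \<Sum>j\<le>n. u j * T' (ys j) x)" using assms(3) by simp
  also have "\<dots> = T' (hmap n ys u)"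
    using assms(2) unfolding slin_def hmap_def by (metis finite_atMost)
  finally show ?thesis .
qed

lemma hmap_A:
  assumes "y \<in> carO n" "u \<in> carO n"
  shows "hmap n (aseq n a y) (OX n a u) = OX n a (hmap n (aseq n a y) u)"
proof (rule intertwine[OF slin_OX slin_OX _ assms(2)])
  fix j assume j: "j \<le> n"
  have "hmap n (aseq n a y) (OX n a (ev j)) = lc (Otheta n a j) (aseq n a y j) 1 (if j < n then aseq n a y (Suc j) else (\<lambda>_. 0))"
    unfolding A_ev'[OF j] hmap_lc using j by (simp add: hmap_ev hmap_0)
  also have "\<dots> = OX n a (aseq n a y j)"
  proof (cases "j < n")
    case True then show ?thesis by (simp only: aseq_A if_True)
  next
    case False then have "j = n" using j by simp
    then show ?thesis using aseq_top[OF assms(1), of a] by (simp only: aseq_A if_False less_irrefl)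
  qed
  finally show "hmap n (aseq n a y) (OX n a (ev j)) = OX n a (aseq n a y j)" .
qed



lemma step_gen:
  fixes A B Z :: "(nat \<Rightarrow> complex) \<Rightarrow> (nat \<Rightarrow> complex)"
  assumes LA: "\<And>p f q g. A (lc p f q g) = lc p (A f) q (A g)"
    and LB: "\<And>p f q g. B (lc p f q g) = lc p (B f) q (B g)"
    and ZA: "\<And>x. Z x = lc 1 (A (B x)) 1 (lc 1 (B (A x)) (-\<kappa>) x)"
    and rel: "\<And>i. Z (A u) i + A (Z u) i - B u i = \<mu> * u i"
    and Au: "A u = lc \<theta> u 1 w" and Aw: "A w = lc \<theta>' w 1 w'"
  shows "B w' = lc \<mu> u 1 (lc 1 (B u) 1 (lc (2*\<kappa>*\<theta>) u 1 (lc (2*\<kappa>) w 1 (lc (-2*\<theta>) (A (B u)) 1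
           (lc (-2) (A (B w)) 1 (lc (-1) (A (A (B u))) 1 (lc (-(\<theta>*\<theta>)) (B u) (-(\<theta>+\<theta>')) (B w))))))))"
proof
  fix i
  have r: "Z (A u) i + A (Z u) i - B u i - \<mu> * u i = 0" using rel[of i] by simp
  have "B w' i - lc \<mu> u 1 (lc 1 (B u) 1 (lc (2*\<kappa>*\<theta>) u 1 (lc (2*\<kappa>) w 1 (lc (-2*\<theta>) (A (B u)) 1
           (lc (-2) (A (B w)) 1 (lc (-1) (A (A (B u))) 1 (lc (-(\<theta>*\<theta>)) (B u) (-(\<theta>+\<theta>')) (B w)))))))) i
       = Z (A u) i + A (Z u) i - B u i - \<mu> * u i"
    unfolding ZA by (simp add: Au Aw LA LB lc_apply algebra_simps)
  then show "B w' i = lc \<mu> u 1 (lc 1 (B u) 1 (lc (2*\<kappa>*\<theta>) u 1 (lc (2*\<kappa>) w 1 (lc (-2*\<theta>) (A (B u)) 1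
           (lc (-2) (A (B w)) 1 (lc (-1) (A (A (B u))) 1 (lc (-(\<theta>*\<theta>)) (B u) (-(\<theta>+\<theta>')) (B w)))))))) i"
    using r by simp
qed

lemma base_gen:
  fixes A B Z :: "(nat \<Rightarrow> complex) \<Rightarrow> (nat \<Rightarrow> complex)"
  assumes LA: "\<And>p f q g. A (lc p f q g) = lc p (A f) q (A g)"
    and LB: "\<And>p f q g. B (lc p f q g) = lc p (B f) q (B g)"
    and ZA: "\<And>x. Z x = lc 1 (A (B x)) 1 (lc 1 (B (A x)) (-\<kappa>) x)"
    and rel: "\<And>i. B (Z y) i + Z (B y) i - A y i = lam * y i"
    and By: "B y = lc d0 y 0 y" and Ay: "A y = lc thz y 1 y1"
    and HC: "lam + 2*\<kappa>*d0 - thz*(4*d0*d0 - 1) = e1 * (2*d0 + 1)"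
  shows "lc 1 (B (lc 1 (B y1) 1 (lc (-(1-d0)) y1 (-e1) y))) (d0+1) (lc 1 (B y1) 1 (lc (-(1-d0)) y1 (-e1) y)) = (\<lambda>_. 0)"
proof
  fix i
  have r: "B (Z y) i + Z (B y) i - A y i - lam * y i = 0" using rel[of i] by simp
  have "lc 1 (B (lc 1 (B y1) 1 (lc (-(1-d0)) y1 (-e1) y))) (d0+1) (lc 1 (B y1) 1 (lc (-(1-d0)) y1 (-e1) y)) i
     = (B (Z y) i + Z (B y) i - A y i - lam * y i) + (lam + 2*\<kappa>*d0 - thz*(4*d0*d0 - 1) - e1 * (2*d0 + 1)) * y i"
    unfolding ZA by (simp add: By Ay LA LB lc_apply algebra_simps)
  then show "lc 1 (B (lc 1 (B y1) 1 (lc (-(1-d0)) y1 (-e1) y))) (d0+1) (lc 1 (B y1) 1 (lc (-(1-d0)) y1 (-e1) y)) i = 0"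
    using r HC by simp
qed


fun yrec :: "nat \<Rightarrow> complex \<Rightarrow> complex \<Rightarrow> complex \<Rightarrow> nat \<Rightarrow> complex" where
  "yrec n a b c 0 = 1"
| "yrec n a b c (Suc m) = Ophi n a b c (n - m) * yrec n a b c m / (Otheta n b n - Otheta n b (n - Suc m))"

definition yvec :: "nat \<Rightarrow> complex \<Rightarrow> complex \<Rightarrow> complex \<Rightarrow> nat \<Rightarrow> complex" where
  "yvec n a b c = (\<lambda>j. if j \<le> n then yrec n a b c (n - j) else 0)"

lemma yvec_car: "yvec n a b c \<in> carO n" by (simp add: yvec_def carO_def)

lemma yvec_eig:
  assumes "\<forall>j<n. Otheta n b j \<noteq> Otheta n b n"
  shows "OY n a b c (yvec n a b c) = lc (Otheta n b n) (yvec n a b c) 0 (yvec n a b c)"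
proof
  fix i
  show "OY n a b c (yvec n a b c) i = lc (Otheta n b n) (yvec n a b c) 0 (yvec n a b c) i"
  proof (cases "i < n")
    case True
    then obtain m where m: "n - i = Suc m" "n - Suc i = m" by (metis Suc_diff_Suc)
    have nm: "n - m = Suc i" "n - Suc m = i" using m True by auto
    have dz: "Otheta n b n - Otheta n b i \<noteq> 0" using assms True by auto
    have "yvec n a b c i = Ophi n a b c (Suc i) * yvec n a b c (Suc i) / (Otheta n b n - Otheta n b i)"
      using True m nm by (simp add: yvec_def)
    then have "(Otheta n b n - Otheta n b i) * yvec n a b c i = Ophi n a b c (Suc i) * yvec n a b c (Suc i)"
      using dz by (simp add: field_simps)
    then show ?thesis using True by (simp add: OY_def lc_def algebra_simps)
  next
    case False
    then show ?thesis by (cases "i = n") (auto simp: OY_def lc_def yvec_def)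
  qed
qed

lemma yrec_nz:
  assumes "\<forall>j<n. Otheta n b j \<noteq> Otheta n b n" "\<forall>j. 1 \<le> j \<and> j \<le> n \<longrightarrow> Ophi n a b c j \<noteq> 0"
  shows "m \<le> n \<Longrightarrow> yrec n a b c m \<noteq> 0"
proof (induction m)
  case 0 then show ?case by simp
next
  case (Suc m)
  have "Ophi n a b c (n - m) \<noteq> 0" using assms(2) Suc.prems by auto
  moreover have "n - Suc m < n" using Suc.prems by simp
  then have "Otheta n b (n - Suc m) \<noteq> Otheta n b n" using assms(1) by blast
  then have "Otheta n b n - Otheta n b (n - Suc m) \<noteq> 0" by simp
  ultimately show ?case using Suc by simp
qed

lemma OX_neg: "OX d a (\<lambda>i. - f i) = (\<lambda>i. - OX d a f i)" by (auto simp: OX_def fun_eq_iff)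
lemma OY_neg: "OY d a b c (\<lambda>i. - f i) = (\<lambda>i. - OY d a b c f i)" by (auto simp: OY_def fun_eq_iff)

lemma BWo_lc: "(\<lambda>i. - OY d a b c (lc p f q g) i) = lc p (\<lambda>i. - OY d a b c f i) q (\<lambda>i. - OY d a b c g i)"
  using OY_lc[of d a b c p f q g] unfolding lc_def by (simp add: fun_eq_iff algebra_simps)

lemma csub_sum:
  assumes "csubspace U" "finite S" "\<forall>j\<in>S. g j \<in> U"
  shows "(\<lambda>x. \<Sum>j\<in>S. cf j * g j x) \<in> U"
  using assms(2,3)
proof (induction S rule: finite_induct)
  case empty then show ?case using assms(1) by (simp add: csubspace_def)
next
  case (insert j S)
  then have "lc (cf j) (g j) 1 (\<lambda>x. \<Sum>j\<in>S. cf j * g j x) \<in> U" using assms(1) unfolding csubspace_def by blast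
  then show ?case using insert by (simp add: lc_def)
qed

lemma inj_shift:
  assumes q: "q \<in> carO n" and e: "\<And>i. OY n a b c q i + s * q i = 0" and nz: "\<forall>j\<le>n. Otheta n b j + s \<noteq> 0"
  shows "q = (\<lambda>_. 0)"
proof -
  have "q (n - m) = 0" for m
  proof (induction m)
    case 0
    have "OY n a b c q n = Otheta n b n * q n" using q by (simp add: OY_def carO_def)
    then have "(Otheta n b n + s) * q n = 0" using e[of n] by (simp add: algebra_simps)
    then show ?case using nz by simp
  next
    case (Suc m)
    show ?case
    proof (cases "m < n")
      case True
      then have i1: "Suc (n - Suc m) = n - m" by simp
      have "OY n a b c q (n - Suc m) = Otheta n b (n - Suc m) * q (n - Suc m) + Ophi n a b c (Suc (n - Suc m)) * q (Suc (n - Suc m))"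
        using OY_at[OF q, of "n - Suc m" a b c] by simp
      then have "(Otheta n b (n - Suc m) + s) * q (n - Suc m) = 0"
        using e[of "n - Suc m"] Suc.IH i1 by (simp add: algebra_simps)
      then show ?thesis using nz by simp
    next
      case False then show ?thesis using Suc.IH by simp
    qed
  qed
  then show ?thesis using q by (auto simp: fun_eq_iff carO_def) (metis diff_diff_cancel not_le_imp_less)
qed


fun Qs :: "nat \<Rightarrow> complex \<Rightarrow> complex \<Rightarrow> complex \<Rightarrow> nat \<Rightarrow> (nat \<Rightarrow> complex) \<Rightarrow> (nat \<Rightarrow> complex)" where
  "Qs n a b c 0 x = x"
| "Qs n a b c (Suc l) x = lc 1 (OY n a b c (Qs n a b c l x)) (- Otheta n b (n - Suc l)) (Qs n a b c l x)"

lemma Qs_lc: "Qs n a b c l (lc p f q g) = lc p (Qs n a b c l f) q (Qs n a b c l g)"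
  apply (induction l)
   apply simp
  apply (simp only: Qs.simps OY_lc)
  apply (simp add: lc_def fun_eq_iff algebra_simps)
  done

lemma Qs_comm: "Qs n a b c l (OY n a b c x) = OY n a b c (Qs n a b c l x)"
  by (induction l) (simp_all add: OY_lc)

lemma Qs_car: "x \<in> carO n \<Longrightarrow> Qs n a b c l x \<in> carO n"
  by (induction l) (simp_all add: lc_car OY_car)

lemma Qs_U: assumes "csubspace U" "\<forall>u\<in>U. OY n a b c u \<in> U" "x \<in> U" shows "Qs n a b c l x \<in> U"
  using assms by (induction l) (simp_all add: csubspace_def)

lemma Qs_flag:
  assumes z: "z \<in> carO n" "\<forall>i\<ge>n. z i = 0"
  shows "l \<le> n \<Longrightarrow> n - l \<le> i \<Longrightarrow> Qs n a b c l z i = 0"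
proof (induction l arbitrary: i)
  case 0 then show ?case using z by simp
next
  case (Suc l)
  let ?x = "Qs n a b c l z"
  have xc: "?x \<in> carO n" by (rule Qs_car[OF z(1)])
  have IH: "\<And>i. n - l \<le> i \<Longrightarrow> ?x i = 0" using Suc by simp
  show ?case
  proof (cases "i \<le> n")
    case True
    have "OY n a b c ?x i = Otheta n b i * ?x i + Ophi n a b c (Suc i) * ?x (Suc i)"
      by (rule OY_at[OF xc True])
    moreover have "?x (Suc i) = 0" using IH Suc.prems by simp
    moreover have "n - l \<le> i \<or> i = n - Suc l" using Suc.prems by auto
    ultimately show ?thesis using IH by (auto simp: lc_def)
  next
    case False then show ?thesis using xc OY_car[of n a b c ?x] by (simp add: lc_def carO_def)
  qed
qed

lemma Qs_eig:
  assumes "even n" "x \<in> carO n"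
  shows "OY n a b c (Qs n a b c n x) = lc (Otheta n b n) (Qs n a b c n x) 0 (Qs n a b c n x)"
proof -
  let ?z = "lc 1 (OY n a b c x) (- Otheta n b n) x"
  have zc: "?z \<in> carO n" using assms by (simp add: lc_car OY_car)
  have z0: "\<forall>i\<ge>n. ?z i = 0"
  proof (intro allI impI)
    fix i assume "n \<le> i"
    then show "?z i = 0" using assms(2) OY_at[OF assms(2), of n a b c] by (cases "i = n") (auto simp: lc_def carO_def OY_def)
  qed
  have "Qs n a b c n ?z = (\<lambda>_. 0)" using Qs_flag[OF zc z0, of n] by (simp add: fun_eq_iff)
  then have "lc 1 (OY n a b c (Qs n a b c n x)) (- Otheta n b n) (Qs n a b c n x) = (\<lambda>_. 0)"
    by (simp add: Qs_lc Qs_comm)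
  then show ?thesis by (simp add: lc_def fun_eq_iff)
qed

lemma Qs_top:
  assumes "\<forall>j<n. Otheta n b j \<noteq> Otheta n b n" "x \<in> carO n" "x n \<noteq> 0"
  shows "l \<le> n \<Longrightarrow> Qs n a b c l x n \<noteq> 0"
proof (induction l)
  case 0 then show ?case using assms by simp
next
  case (Suc l)
  let ?x = "Qs n a b c l x"
  have xc: "?x \<in> carO n" by (rule Qs_car[OF assms(2)])
  have "OY n a b c ?x n = Otheta n b n * ?x n" using xc by (simp add: OY_def carO_def)
  then have "Qs n a b c (Suc l) x n = (Otheta n b n - Otheta n b (n - Suc l)) * ?x n"
    by (simp add: lc_def algebra_simps)
  moreover have "Otheta n b (n - Suc l) \<noteq> Otheta n b n" using assms(1) Suc.prems by simp
  ultimately show ?case using Suc by simp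
qed

lemma eig_unique:
  assumes "\<forall>j<n. Otheta n b j \<noteq> Otheta n b n" "z \<in> carO n"
    and e: "OY n a b c z = lc (Otheta n b n) z 0 z" and zn: "z n = 0"
  shows "z = (\<lambda>_. 0)"
proof -
  have "z (n - m) = 0" for m
  proof (induction m)
    case 0 then show ?case using zn by simp
  next
    case (Suc m)
    show ?case
    proof (cases "m < n")
      case True
      then have i1: "Suc (n - Suc m) = n - m" by simp
      have F: "OY n a b c z (n - Suc m) = Otheta n b (n - Suc m) * z (n - Suc m)"
        using OY_at[OF assms(2), of "n - Suc m" a b c] Suc.IH i1 by simp
      have E: "OY n a b c z (n - Suc m) = Otheta n b n * z (n - Suc m)"
        using fun_cong[OF e, of "n - Suc m"] by (simp add: lc_def)
      have neq: "Otheta n b (n - Suc m) \<noteq> Otheta n b n" using assms(1) True by simp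
      have "Otheta n b (n - Suc m) * z (n - Suc m) = Otheta n b n * z (n - Suc m)" using E F by simp
      then show ?thesis using neq mult_cancel_right by metis
    next
      case False then show ?thesis using Suc.IH by simp
    qed
  qed
  then show ?thesis using assms(2) by (auto simp: fun_eq_iff carO_def) (metis diff_diff_cancel not_le_imp_less)
qed

context
  fixes n :: nat and a b c :: complex
  assumes n_even: "even n"
    and c1: "\<forall>j<n. Otheta n (-b) j \<noteq> Otheta n (-b) n"
    and c2: "\<forall>j\<le>n. Otheta n (-b) j + (Otheta n (-b) n + 1) \<noteq> 0"
    and pW: "\<forall>j. 1 \<le> j \<and> j \<le> n \<longrightarrow> Ophi n a b c j \<noteq> 0"
    and pN: "\<forall>j. 1 \<le> j \<and> j \<le> n \<longrightarrow> Ophi n a (-b) (-c) j \<noteq> 0"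
begin

abbreviation "yN \<equiv> yvec n a (-b) (-c)"
abbreviation "ys \<equiv> aseq n a yN"
abbreviation "hh \<equiv> hmap n ys"
abbreviation "BWo \<equiv> (\<lambda>v i. - OY n a b c v i)"
abbreviation "BNo \<equiv> OY n a (-b) (-c)"
abbreviation "ZWo \<equiv> (\<lambda>v i. - ZO n a b c v i)"
abbreviation "ZNo \<equiv> ZO n a (-b) (-c)"
definition "kap = - (2*a*b - c*(of_nat n+1))"
definition "muu = - (2*c*a - b*(of_nat n+1))"

lemma d0_eq: "Otheta n (-b) n = - Otheta n b 0"
  using n_even by (simp add: Otheta_def field_simps)

lemma ys_car: "ys j \<in> carO n" by (rule aseq_car[OF yvec_car])

lemma BWo_car: "BWo v \<in> carO n" using OY_car[of n a b c v] by (simp add: carO_def)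

lemma ZW_form: "ZWo x = lc 1 (OX n a (BWo x)) 1 (lc 1 (BWo (OX n a x)) (-kap) x)"
  by (simp add: ZO_def OX_neg lc_def fun_eq_iff kap_def algebra_simps)

lemma ZN_form: "ZNo x = lc 1 (OX n a (BNo x)) 1 (lc 1 (BNo (OX n a x)) (-kap) x)"
  by (simp add: ZO_def lc_def fun_eq_iff kap_def algebra_simps)

lemma muW: "u \<in> carO n \<Longrightarrow> ZWo (OX n a u) i + OX n a (ZWo u) i - BWo u i = muu * u i"
  using mu_rel[OF n_even, of u a b c i] by (simp add: OX_neg muu_def algebra_simps)

lemma muN: "u \<in> carO n \<Longrightarrow> ZNo (OX n a u) i + OX n a (ZNo u) i - BNo u i = muu * u i"
  using mu_rel[OF n_even, of u a "-b" "-c" i] by (simp add: muu_def algebra_simps)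

lemma lamN: "u \<in> carO n \<Longrightarrow> BNo (ZNo u) i + ZNo (BNo u) i - OX n a u i = (2*b*c - a*(of_nat n+1)) * u i"
  using lam_rel[OF n_even, of u a "-b" "-c" i] by (simp add: algebra_simps)

lemma hA: "u \<in> carO n \<Longrightarrow> hh (OX n a u) = OX n a (hh u)"
  by (rule hmap_A[OF yvec_car])

lemma BW_ev: "j \<le> n \<Longrightarrow> BWo (ev j) = lc (- Otheta n b j) (ev j) (if 1 \<le> j then - Ophi n a b c j else 0) (ev (j - 1))"
  by (auto simp: B_ev lc_def fun_eq_iff)

lemma HC: "(2*b*c - a*(of_nat n+1)) + 2*kap*(- Otheta n b 0) - Otheta n a 0*(4*(- Otheta n b 0)*(- Otheta n b 0) - 1)
     = (- Ophi n a b c 1) * (2*(- Otheta n b 0) + 1)"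
  by (simp add: kap_def Otheta_def Ophi_def field_simps)

lemma hB_ev: "j \<le> n \<Longrightarrow> hh (BWo (ev j)) = BNo (ys j)"
proof (induction j rule: less_induct)
  case (less j)
  show ?case
  proof (cases j)
    case 0
    have "hh (BWo (ev 0)) = lc (- Otheta n b 0) yN 0 yN"
      by (simp add: BW_ev hmap_lc hmap_ev)
    also have "\<dots> = BNo (ys 0)" using yvec_eig[OF c1, of a "-c"] d0_eq by simp
    finally show ?thesis using 0 by simp
  next
    case (Suc j1)
    show ?thesis
    proof (cases j1)
      case 0
      have j1: "Suc 0 \<le> n" using less.prems Suc 0 by simp
      define d0 where "d0 = - Otheta n b 0"
      define e1 where "e1 = - Ophi n a b c 1"
      define q where "q = lc 1 (BNo (ys 1)) 1 (lc (-(1-d0)) (ys 1) (-e1) yN)"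
      have L: "lc 1 (BNo q) (d0+1) q = (\<lambda>_. 0)" unfolding q_def
      proof (rule base_gen[where A="OX n a" and Z = ZNo and \<kappa> = kap and lam = "2*b*c - a*(of_nat n+1)" and thz = "Otheta n a 0"])
        show "\<And>p f q g. OX n a (lc p f q g) = lc p (OX n a f) q (OX n a g)" by (rule OX_lc)
        show "\<And>p f q g. BNo (lc p f q g) = lc p (BNo f) q (BNo g)" by (rule OY_lc)
        show "\<And>x. ZNo x = lc 1 (OX n a (BNo x)) 1 (lc 1 (BNo (OX n a x)) (- kap) x)" by (rule ZN_form)
        show "\<And>i. BNo (ZNo yN) i + ZNo (BNo yN) i - OX n a yN i = (2*b*c - a*(of_nat n+1)) * yN i"
          by (rule lamN[OF yvec_car])
        show "BNo yN = lc d0 yN 0 yN" using yvec_eig[OF c1, of a "-c"] d0_eq d0_def by simp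
        show "OX n a yN = lc (Otheta n a 0) yN 1 (ys 1)" using aseq_A[of n a yN 0] by simp
        show "2 * b * c - a * (of_nat n + 1) + 2 * kap * d0 - Otheta n a 0 * (4 * d0 * d0 - 1) = e1 * (2 * d0 + 1)"
          using HC d0_def e1_def by simp
      qed
      have qc: "q \<in> carO n" unfolding q_def by (intro lc_car OY_car ys_car yvec_car)
      have "q = (\<lambda>_. 0)"
      proof (rule inj_shift[OF qc])
        show "\<And>i. BNo q i + (d0 + 1) * q i = 0" using L by (simp add: lc_def fun_eq_iff)
        show "\<forall>j\<le>n. Otheta n (- b) j + (d0 + 1) \<noteq> 0" using c2 d0_eq d0_def by simp
      qed
      then have "BNo (ys 1) = lc (1 - d0) (ys 1) e1 yN" unfolding q_def by (auto simp: lc_def fun_eq_iff algebra_simps)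
      moreover have "hh (BWo (ev 1)) = lc (- Otheta n b 1) (ys 1) e1 yN"
        using j1 by (simp add: BW_ev hmap_lc hmap_ev e1_def)
      moreover have "- Otheta n b 1 = 1 - d0" using th_Suc_eq[of n b 0] d0_def by simp
      ultimately show ?thesis using Suc 0 by simp
    next
      case (Suc i)
      have jj: "j = Suc (Suc i)" using \<open>j = Suc j1\<close> Suc by simp
      have i2: "Suc (Suc i) \<le> n" using less.prems jj by simp
      have IH1: "hh (BWo (ev i)) = BNo (ys i)" using less.IH[of i] jj i2 by simp
      have IH2: "hh (BWo (ev (Suc i))) = BNo (ys (Suc i))" using less.IH[of "Suc i"] jj i2 by simp
      have SW: "BWo (ev (Suc (Suc i))) = lc muu (ev i) 1 (lc 1 (BWo (ev i)) 1 (lc (2*kap*Otheta n a i) (ev i) 1 (lc (2*kap) (ev (Suc i)) 1 (lc (-2*Otheta n a i) (OX n a (BWo (ev i))) 1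
           (lc (-2) (OX n a (BWo (ev (Suc i)))) 1 (lc (-1) (OX n a (OX n a (BWo (ev i)))) 1 (lc (-(Otheta n a i*Otheta n a i)) (BWo (ev i)) (-(Otheta n a i+Otheta n a (Suc i))) (BWo (ev (Suc i))))))))))"
      proof (rule step_gen[where Z = ZWo])
        show "\<And>p f q g. OX n a (lc p f q g) = lc p (OX n a f) q (OX n a g)" by (rule OX_lc)
        show "\<And>p f q g. BWo (lc p f q g) = lc p (BWo f) q (BWo g)" by (rule BWo_lc)
        show "\<And>x. ZWo x = lc 1 (OX n a (BWo x)) 1 (lc 1 (BWo (OX n a x)) (- kap) x)" by (rule ZW_form)
        show "\<And>ia. ZWo (OX n a (ev i)) ia + OX n a (ZWo (ev i)) ia - BWo (ev i) ia = muu * ev i ia"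
          by (rule muW) (use i2 ev_car in simp)
        show "OX n a (ev i) = lc (Otheta n a i) (ev i) 1 (ev (Suc i))" using A_ev'[of i n a] i2 by simp
        show "OX n a (ev (Suc i)) = lc (Otheta n a (Suc i)) (ev (Suc i)) 1 (ev (Suc (Suc i)))" using A_ev'[of "Suc i" n a] i2 by simp
      qed
      have SN: "BNo (ys (Suc (Suc i))) = lc muu (ys i) 1 (lc 1 (BNo (ys i)) 1 (lc (2*kap*Otheta n a i) (ys i) 1 (lc (2*kap) (ys (Suc i)) 1 (lc (-2*Otheta n a i) (OX n a (BNo (ys i))) 1
           (lc (-2) (OX n a (BNo (ys (Suc i)))) 1 (lc (-1) (OX n a (OX n a (BNo (ys i)))) 1 (lc (-(Otheta n a i*Otheta n a i)) (BNo (ys i)) (-(Otheta n a i+Otheta n a (Suc i))) (BNo (ys (Suc i))))))))))"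
      proof (rule step_gen[where Z = ZNo])
        show "\<And>p f q g. OX n a (lc p f q g) = lc p (OX n a f) q (OX n a g)" by (rule OX_lc)
        show "\<And>p f q g. BNo (lc p f q g) = lc p (BNo f) q (BNo g)" by (rule OY_lc)
        show "\<And>x. ZNo x = lc 1 (OX n a (BNo x)) 1 (lc 1 (BNo (OX n a x)) (- kap) x)" by (rule ZN_form)
        show "\<And>ia. ZNo (OX n a (ys i)) ia + OX n a (ZNo (ys i)) ia - BNo (ys i) ia = muu * ys i ia"
          by (rule muN[OF ys_car])
        show "OX n a (ys i) = lc (Otheta n a i) (ys i) 1 (ys (Suc i))" by (rule aseq_A)
        show "OX n a (ys (Suc i)) = lc (Otheta n a (Suc i)) (ys (Suc i)) 1 (ys (Suc (Suc i)))" by (rule aseq_A)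
      qed
      have "hh (BWo (ev (Suc (Suc i)))) = BNo (ys (Suc (Suc i)))"
        unfolding SW SN using i2 by (simp add: hmap_lc hmap_ev hA BWo_car OX_car IH1 IH2)
      then show ?thesis using jj by simp
    qed
  qed
qed

lemma hB: "u \<in> carO n \<Longrightarrow> hh (BWo u) = BNo (hh u)"
  by (rule intertwine[OF slin_neg[OF slin_OY] slin_OY hB_ev])

lemma hZ: "u \<in> carO n \<Longrightarrow> hh (ZWo u) = ZNo (hh u)"
  unfolding ZW_form ZN_form by (simp add: hmap_lc hA hB BWo_car OX_car)

lemma hh_car: "hh u \<in> carO n"
  using ys_car by (simp add: hmap_def carO_def)

lemma ys_low: "i < j \<Longrightarrow> ys j i = 0" by (rule aseq_low[OF yvec_car])

lemma diag_nz: "j \<le> n \<Longrightarrow> ys j j \<noteq> 0"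
proof (induction j)
  case 0
  have "yrec n a (-b) (-c) n \<noteq> 0" using yrec_nz[OF c1 pN] by simp
  then show ?case by (simp add: yvec_def)
next
  case (Suc j)
  have L: "hh (BWo (ev (Suc j))) j = - Ophi n a b c (Suc j) * ys j j"
    unfolding BW_ev[OF Suc.prems] hmap_lc using Suc.prems by (simp add: hmap_ev lc_def ys_low del: aseq.simps)
  have R: "BNo (ys (Suc j)) j = Ophi n a (-b) (-c) (Suc j) * ys (Suc j) (Suc j)"
    using OY_at[OF ys_car[of "Suc j"], of j a "-b" "-c"] Suc.prems by (simp add: ys_low del: aseq.simps)
  have "Ophi n a (-b) (-c) (Suc j) * ys (Suc j) (Suc j) = - Ophi n a b c (Suc j) * ys j j"
    using L R hB_ev[OF Suc.prems] by simp
  moreover have "Ophi n a b c (Suc j) \<noteq> 0" using pW Suc.prems by simp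
  moreover have "ys j j \<noteq> 0" using Suc by simp
  ultimately show ?case by auto
qed

lemma hh_zero: assumes v: "v \<in> carO n" and h0: "hh v = (\<lambda>_. 0)" shows "v = (\<lambda>_. 0)"
proof (rule ccontr)
  assume "v \<noteq> (\<lambda>_. 0)"
  then obtain i where "v i \<noteq> 0" by auto
  define m where "m = (LEAST i. v i \<noteq> 0)"
  have vm: "v m \<noteq> 0" unfolding m_def by (rule LeastI) (rule \<open>v i \<noteq> 0\<close>)
  have low: "\<And>j. j < m \<Longrightarrow> v j = 0" unfolding m_def using not_less_Least by blast
  have mn: "m \<le> n" using vm v by (auto simp: carO_def not_le[symmetric])
  have "hh v m = (\<Sum>j\<le>n. if j = m then v m * ys m m else 0)"
    unfolding hmap_def
  proof (rule sum.cong)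
    fix j assume "j \<in> {..n}"
    show "v j * ys j m = (if j = m then v m * ys m m else 0)"
      using low ys_low by (cases "j < m"; cases "j = m"; simp)
  qed simp
  also have "\<dots> = v m * ys m m" using mn by (simp add: sum.delta)
  finally have "hh v m = v m * ys m m" .
  moreover have "ys m m \<noteq> 0" using diag_nz mn by simp
  ultimately show False using vm h0 by (simp add: fun_eq_iff)
qed

lemma hh_inj: "inj_on hh (carO n)"
proof (rule inj_onI)
  fix u u' assume u: "u \<in> carO n" and u': "u' \<in> carO n" and e: "hh u = hh u'"
  have "hh (lc 1 u (-1) u') = lc 1 (hh u) (-1) (hh u')" by (rule hmap_lc)
  then have "hh (lc 1 u (-1) u') = (\<lambda>_. 0)" using e by (simp add: lc_def)
  then have "lc 1 u (-1) u' = (\<lambda>_. 0)" using hh_zero lc_car[OF u u'] by blast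
  then show "u = u'" by (simp add: lc_def fun_eq_iff)
qed

lemma hh_surj: "carO n \<subseteq> hh ` carO n"
proof -
  have P: "\<forall>t\<in>carO n. (\<forall>i<j. t i = 0) \<longrightarrow> t \<in> hh ` carO n" if "j \<le> Suc n" for j
    using that
  proof (induction j rule: inc_induct)
    case base
    show ?case
    proof (intro ballI impI)
      fix t assume t: "t \<in> carO n" "\<forall>i<Suc n. t i = 0"
      then have "t = (\<lambda>_. 0)" by (auto simp: carO_def fun_eq_iff) (metis less_Suc_eq_le not_le)
      moreover have "hh (\<lambda>_. 0) = (\<lambda>_. 0)" by (rule hmap_0)
      moreover have "(\<lambda>_. 0) \<in> carO n" by (simp add: carO_def)
      ultimately show "t \<in> hh ` carO n" by (metis image_eqI)
    qed
  next
    case (step j)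
    show ?case
    proof (intro ballI impI)
      fix t assume t: "t \<in> carO n" and tz: "\<forall>i<j. t i = 0"
      have jn: "j \<le> n" using step by simp
      define l where "l = ys j j"
      have l0: "l \<noteq> 0" using diag_nz jn l_def by simp
      define t' where "t' = lc 1 t (- (t j / l)) (ys j)"
      have t'c: "t' \<in> carO n" unfolding t'_def by (rule lc_car[OF t ys_car])
      have "\<forall>i<Suc j. t' i = 0"
      proof (intro allI impI)
        fix i assume "i < Suc j"
        then show "t' i = 0" using tz ys_low[of i j] l0 unfolding t'_def l_def
          by (cases "i = j") (auto simp: lc_def)
      qed
      then obtain p where p: "p \<in> carO n" "t' = hh p" using step.IH t'c by auto
      have "t = lc 1 t' (t j / l) (ys j)" unfolding t'_def by (simp add: lc_def fun_eq_iff)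
      also have "\<dots> = hh (lc 1 p (t j / l) (ev j))" using p jn by (simp add: hmap_lc hmap_ev)
      finally show "t \<in> hh ` carO n" using lc_car[OF p(1) ev_car[OF jn]] by blast
    qed
  qed
  show ?thesis using P[of 0] by auto
qed

lemma hh_bij: "bij_betw hh (carO n) (carO n)"
  unfolding bij_betw_def using hh_inj hh_surj hh_car by blast

lemma N_irred_core:
  assumes U: "U \<subseteq> carO n" "csubspace U" "\<forall>u\<in>U. OX n a u \<in> U \<and> BNo u \<in> U" "U \<noteq> {\<lambda>_. 0}"
  shows "U = carO n"
proof -
  have U0: "(\<lambda>_. 0) \<in> U" using U(2) by (simp add: csubspace_def)
  have lcU: "\<And>p f q g. f \<in> U \<Longrightarrow> g \<in> U \<Longrightarrow> lc p f q g \<in> U" using U(2) by (simp add: csubspace_def)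
  obtain u where u: "u \<in> U" "u n \<noteq> 0"
  proof (rule ccontr)
    assume "\<not> thesis"
    then have H: "\<forall>u\<in>U. u n = 0" using that by blast
    have Z: "\<forall>u\<in>U. \<forall>i. n - m \<le> i \<longrightarrow> u i = 0" for m
    proof (induction m)
      case 0
      show ?case
      proof (intro ballI allI impI)
        fix v i assume "v \<in> U" "n - 0 \<le> i"
        then show "v i = 0" using H U(1) by (cases "i = n") (auto simp: carO_def)
      qed
    next
      case (Suc m)
      show ?case
      proof (intro ballI allI impI)
        fix v i assume v: "v \<in> U" and i: "n - Suc m \<le> i"
        show "v i = 0"
        proof (cases "n - m \<le> i")
          case True then show ?thesis using Suc.IH v by blast
        next
          case False
          then have ii: "Suc i = n - m" "Suc i \<le> n" using i by auto
          have A0: "OX n a v (Suc i) = 0" using Suc.IH U(3) v ii by auto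
          have V0: "v (Suc i) = 0" using Suc.IH v ii by auto
          have "OX n a v (Suc i) = Otheta n a (Suc i) * v (Suc i) + v i" by (rule OX_Suc[OF ii(2)])
          then show ?thesis using A0 V0 by simp
        qed
      qed
    qed
    have "U = {\<lambda>_. 0}"
    proof
      show "U \<subseteq> {\<lambda>_. 0}" using Z[of n] by (auto simp: fun_eq_iff)
      show "{\<lambda>_. 0} \<subseteq> U" using U0 by simp
    qed
    then show False using U(4) by simp
  qed
  have uc: "u \<in> carO n" using u U(1) by auto
  define Q where "Q = Qs n a (-b) (-c) n u"
  have QU: "Q \<in> U" unfolding Q_def using Qs_U[OF U(2) _ u(1)] U(3) by blast
  have Qc: "Q \<in> carO n" unfolding Q_def by (rule Qs_car[OF uc])
  have Qe: "BNo Q = lc (Otheta n (-b) n) Q 0 Q" unfolding Q_def by (rule Qs_eig[OF n_even uc])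
  have Qn: "Q n \<noteq> 0" unfolding Q_def by (rule Qs_top[OF c1 uc u(2)]) simp
  define w where "w = lc 1 (lc (1 / Q n) Q 0 Q) (-1) yN"
  have wc: "w \<in> carO n" unfolding w_def by (intro lc_car Qc yvec_car)
  have ye: "BNo yN = lc (Otheta n (-b) n) yN 0 yN" by (rule yvec_eig[OF c1])
  have we: "BNo w = lc (Otheta n (-b) n) w 0 w" unfolding w_def
    by (simp add: OY_lc Qe ye) (simp add: lc_def fun_eq_iff algebra_simps)
  have wn: "w n = 0" using Qn by (simp add: w_def lc_def yvec_def)
  have "w = (\<lambda>_. 0)" by (rule eig_unique[OF c1 wc we wn])
  then have "yN = lc (1 / Q n) Q 0 Q" unfolding w_def by (auto simp: lc_def fun_eq_iff)
  then have yU: "yN \<in> U" using lcU[OF QU QU] by simp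
  have ysU: "ys j \<in> U" for j
  proof (induction j)
    case 0 then show ?case using yU by simp
  next
    case (Suc j)
    have "ys (Suc j) = lc 1 (OX n a (ys j)) (- Otheta n a j) (ys j)" by (simp add: lc_def)
    then show ?case using lcU Suc U(3) by metis
  qed
  have "hh v \<in> U" for v unfolding hmap_def by (rule csub_sum[OF U(2)]) (use ysU in auto)
  then show ?thesis using hh_surj U(1) by blast
qed

lemma W_irred_core:
  assumes U: "U \<subseteq> carO n" "csubspace U" "\<forall>u\<in>U. OX n a u \<in> U \<and> BWo u \<in> U" "U \<noteq> {\<lambda>_. 0}"
  shows "U = carO n"
proof -
  have U0: "(\<lambda>_. 0) \<in> U" using U(2) by (simp add: csubspace_def)
  obtain u where u: "u \<in> U" "u \<noteq> (\<lambda>_. 0)" using U(4) U0 by blast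
  let ?V = "hh ` U"
  have V1: "?V \<subseteq> carO n" using hh_car by auto
  have V2: "csubspace ?V" unfolding csubspace_def
  proof (intro conjI ballI allI)
    show "(\<lambda>_. 0) \<in> ?V" using U0 hmap_0 by (metis image_eqI)
  next
    fix x y p q assume "x \<in> ?V" "y \<in> ?V"
    then obtain x' y' where "x' \<in> U" "y' \<in> U" "x = hh x'" "y = hh y'" by auto
    then show "lc p x q y \<in> ?V" using U(2) hmap_lc unfolding csubspace_def by (metis image_eqI)
  qed
  have V3: "\<forall>v\<in>?V. OX n a v \<in> ?V \<and> BNo v \<in> ?V"
  proof
    fix v assume "v \<in> ?V"
    then obtain v' where v': "v' \<in> U" "v = hh v'" by auto
    then have "v' \<in> carO n" using U(1) by auto
    then show "OX n a v \<in> ?V \<and> BNo v \<in> ?V" using v' U(3) hA hB by (metis image_eqI)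
  qed
  have V4: "?V \<noteq> {\<lambda>_. 0}"
  proof
    assume "?V = {\<lambda>_. 0}"
    then have "hh u = (\<lambda>_. 0)" using u by auto
    then show False using hh_zero u U(1) by auto
  qed
  have V: "?V = carO n" by (rule N_irred_core[OF V1 V2 V3 V4])
  show ?thesis
  proof
    show "carO n \<subseteq> U"
    proof
      fix v assume v: "v \<in> carO n"
      then have "hh v \<in> ?V" using V hh_car by auto
      then obtain u' where u': "u' \<in> U" "hh v = hh u'" by auto
      then have "v = u'" using hh_inj v U(1) by (auto simp: inj_on_def)
      then show "v \<in> U" using u' by simp
    qed
  qed (rule U(1))
qed

lemma W_fields: "car (twist_1m1 (Omod n a b c)) = carO n" "opX (twist_1m1 (Omod n a b c)) = OX n a"
  "opY (twist_1m1 (Omod n a b c)) = BWo" "opZ (twist_1m1 (Omod n a b c)) = ZWo"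
  by (simp_all add: twist_1m1_def car_Omod opX_Omod opY_Omod opZ_Omod)

theorem part2:
  "bi_irreducible (twist_1m1 (Omod n a b c)) \<and> bi_iso (twist_1m1 (Omod n a b c)) (Omod n a (-b) (-c))"
proof
  show "bi_irreducible (twist_1m1 (Omod n a b c))"
    unfolding bi_irreducible_def W_fields
  proof (intro conjI allI impI)
    have "ev 0 \<in> carO n" by (simp add: ev_car)
    moreover have "ev 0 \<noteq> (\<lambda>_. 0)" by (auto simp: ev_def fun_eq_iff)
    ultimately show "carO n \<noteq> {\<lambda>_. 0}" by auto
  next
    fix U assume "U \<subseteq> carO n \<and> csubspace U \<and> (\<forall>u\<in>U. OX n a u \<in> U \<and> BWo u \<in> U \<and> ZWo u \<in> U)"
    then show "U = {\<lambda>_. 0} \<or> U = carO n" using W_irred_core by blast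
  qed
  show "bi_iso (twist_1m1 (Omod n a b c)) (Omod n a (-b) (-c))"
    unfolding bi_iso_def W_fields car_Omod opX_Omod opY_Omod opZ_Omod
  proof (intro exI conjI)
    show "clinear_on (carO n) hh" by (simp add: clinear_on_def hmap_lc)
    show "bij_betw hh (carO n) (carO n)" by (rule hh_bij)
    show "\<forall>v\<in>carO n. hh (OX n a v) = OX n a (hh v) \<and> hh (BWo v) = BNo (hh v) \<and> hh (ZWo v) = ZNo (hh v)"
      using hA hB hZ by blast
  qed
qed

end



lemma two: "{..<2::nat} = {0,1}" by auto

lemma X_raw0: "BIgen k 1 2 3 f (0, (a, Suc t, 0)) =
   \<i> * ((-1)^t * (br k 3 1 * f (1, (a, t, 1)))) + (- ((-1)^t) / 2 + complex_of_real (k 2) - complex_of_real (k 3) * (-1)^t) * f (0, (a, Suc t, 0))"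
  unfolding BIgen_def Let_def pauli_def lift_def
  by (simp add: dunkl_eq sigma_def two refl_def mulx_def algebra_simps)


lemma X_raw1: "BIgen k 1 2 3 f (1, (a, Suc t, 0)) =
   \<i> * ((-1)^t * (br k 3 1 * f (0, (a, t, 1)))) + (- ((-1)^t) / 2 + complex_of_real (k 2) - complex_of_real (k 3) * (-1)^t) * f (1, (a, Suc t, 0))"
  unfolding BIgen_def Let_def pauli_def lift_def
  by (simp add: dunkl_eq sigma_def two refl_def mulx_def algebra_simps)

lemma X_raw_0: "BIgen k 1 2 3 f (e, (a, 0, 0)) = (1/2 + complex_of_real (k 2) + complex_of_real (k 3)) * f (e, (a, 0, 0))"
  unfolding BIgen_def Let_def pauli_def lift_def
  by (simp add: dunkl_eq sigma_def two refl_def mulx_def algebra_simps)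

lemma Y_raw0: "BIgen k 2 3 1 f (0, (Suc a, t, 0)) =
   - ((-1)^a * (br k 3 1 * f (1, (a, t, 1)))) + (- ((-1)^a) / 2 - complex_of_real (k 3) * (-1)^a + complex_of_real (k 1)) * f (0, (Suc a, t, 0))"
  unfolding BIgen_def Let_def pauli_def lift_def
  by (simp add: dunkl_eq sigma_def two refl_def mulx_def algebra_simps)

lemma Y_raw1: "BIgen k 2 3 1 f (1, (Suc a, t, 0)) =
   ((-1)^a * (br k 3 1 * f (0, (a, t, 1)))) + (- ((-1)^a) / 2 - complex_of_real (k 3) * (-1)^a + complex_of_real (k 1)) * f (1, (Suc a, t, 0))"
  unfolding BIgen_def Let_def pauli_def lift_def
  by (simp add: dunkl_eq sigma_def two refl_def mulx_def algebra_simps)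

lemma Y_raw_0: "BIgen k 2 3 1 f (e, (0, t, 0)) = (1/2 + complex_of_real (k 3) + complex_of_real (k 1)) * f (e, (0, t, 0))"
  unfolding BIgen_def Let_def pauli_def lift_def
  by (simp add: dunkl_eq sigma_def two refl_def mulx_def algebra_simps)

lemma Z_raw0: "BIgen k 3 1 2 f (0, (a, t, 0)) =
   \<i> * ((if 1 \<le> t then (-1)^(a+t) * br k 1 (a+1) * f (0, (a+1, t-1, 0)) else 0)
       - (if 1 \<le> a then (-1)^(a+t) * br k 2 (t+1) * f (0, (a-1, t+1, 0)) else 0))
   + ((-1)^(a+t) / 2 + complex_of_real (k 1) * (-1)^t + complex_of_real (k 2) * (-1)^a) * f (0, (a, t, 0))"
  unfolding BIgen_def Let_def pauli_def lift_def
  by (cases a; cases t) (auto simp: dunkl_eq sigma_def two refl_def mulx_def algebra_simps power_add)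

lemma Z_raw1: "BIgen k 3 1 2 f (1, (a, t, 0)) =
   - \<i> * ((if 1 \<le> t then (-1)^(a+t) * br k 1 (a+1) * f (1, (a+1, t-1, 0)) else 0)
       - (if 1 \<le> a then (-1)^(a+t) * br k 2 (t+1) * f (1, (a-1, t+1, 0)) else 0))
   + ((-1)^(a+t) / 2 + complex_of_real (k 1) * (-1)^t + complex_of_real (k 2) * (-1)^a) * f (1, (a, t, 0))"
  unfolding BIgen_def Let_def pauli_def lift_def
  by (cases a; cases t) (auto simp: dunkl_eq sigma_def two refl_def mulx_def algebra_simps power_add)


lemma diff0: "(X::complex) - T = 0 \<Longrightarrow> T = X" by simp
lemma diff0': "(A::complex) - B + C = 0 \<Longrightarrow> C = - A + B"
proof -
  assume h: "A - B + C = 0"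
  have "C = (A - B + C) - A + B" by simp
  then show ?thesis using h by simp
qed

lemma D1: "Dop k v = (\<lambda>_. 0) \<Longrightarrow> br k 3 1 * v (1, (a, t, 1)) = br k 1 (a+1) * v (0, (a+1, t, 0)) + \<i> * br k 2 (t+1) * v (0, (a, t+1, 0))"
proof (rule diff0)
  assume h: "Dop k v = (\<lambda>_. 0)"
  have "Dop k v (1, (a, t, 0)) = 0" using h by simp
  then show "br k 1 (a + 1) * v (0, a + 1, t, 0) + \<i> * br k 2 (t + 1) * v (0, a, t + 1, 0) - br k 3 1 * v (1, a, t, 1) = 0"
    by (simp only: Dop1 add_0)
qed

lemma D0: "Dop k v = (\<lambda>_. 0) \<Longrightarrow> br k 3 1 * v (0, (a, t, 1)) = - (br k 1 (a+1) * v (1, (a+1, t, 0))) + \<i> * br k 2 (t+1) * v (1, (a, t+1, 0))"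
proof (rule diff0')
  assume h: "Dop k v = (\<lambda>_. 0)"
  have "Dop k v (0, (a, t, 0)) = 0" using h by simp
  then show "br k 1 (a + 1) * v (1, a + 1, t, 0) - \<i> * br k 2 (t + 1) * v (1, a, t + 1, 0) + br k 3 1 * v (0, a, t, 1) = 0"
    by (simp only: Dop0 add_0)
qed

lemma m1_diff: "even n \<Longrightarrow> t \<le> n \<Longrightarrow> (-1::complex)^(n - t) = (-1)^t"
  by (simp add: minus_one_power_iff)

definition eps :: "nat \<Rightarrow> complex" where "eps e = (if e = 0 then 1 else -1)"
definition alph :: "(nat \<Rightarrow> real) \<Rightarrow> nat \<Rightarrow> nat \<Rightarrow> nat \<Rightarrow> complex" where
  "alph k n e t = \<i> * eps e * (-1)^t * br k 1 (n - t)"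
definition bet :: "(nat \<Rightarrow> real) \<Rightarrow> nat \<Rightarrow> nat \<Rightarrow> complex" where
  "bet k e t = \<i> * eps e * (-1)^t * br k 2 (t + 1)"

lemma br_nz:
  assumes tp: "ereal (real n) < tpar (k i)" and m: "1 \<le> m" "m \<le> n"
  shows "br k i m \<noteq> 0"
proof
  assume z: "br k i m = 0"
  show False
  proof (cases "even m")
    case True then show False using z m by (simp add: br_def minus_one_power_iff)
  next
    case False
    then have "br k i m = complex_of_real (real m + 2 * k i)" by (simp add: br_def minus_one_power_iff)
    then have r: "real m + 2 * k i = 0" using z by (metis of_real_eq_0_iff)
    have "odd (- int m) \<and> - int m < 0 \<and> 2 * k i = of_int (- int m)" using False m r by auto
    then have ex: "\<exists>mm::int. odd mm \<and> mm < 0 \<and> 2 * k i = of_int mm" by blast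
    have "tpar (k i) = ereal (- 2 * k i)" unfolding tpar_def using ex by simp
    also have "\<dots> = ereal (real m)" using r by simp
    finally show False using tp m by simp
  qed
qed

lemma br_zero_big: "ereal (real n) < tpar (k i) \<Longrightarrow> 1 \<le> m \<Longrightarrow> br k i m = 0 \<Longrightarrow> n < m"
  using br_nz[of n k i m] by force

fun gam :: "(nat \<Rightarrow> real) \<Rightarrow> nat \<Rightarrow> nat \<Rightarrow> nat \<Rightarrow> complex" where
  "gam k n e 0 = 1"
| "gam k n e (Suc t) = gam k n e t * alph k n e t"

lemma alph_nz: "ereal (real n) < tpar (k 1) \<Longrightarrow> t < n \<Longrightarrow> alph k n e t \<noteq> 0"
  using br_nz[of n k 1 "n - t"] by (simp add: alph_def eps_def)

lemma gam_nz: "ereal (real n) < tpar (k 1) \<Longrightarrow> t \<le> n \<Longrightarrow> gam k n e t \<noteq> 0"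
  by (induction t) (auto simp: alph_nz)

definition Fe :: "(nat \<Rightarrow> real) \<Rightarrow> nat \<Rightarrow> nat \<Rightarrow> spoly \<Rightarrow> nat \<Rightarrow> complex" where
  "Fe k n e v = (\<lambda>t. if t \<le> n then v (e, (n - t, t, 0)) / gam k n e t else 0)"

lemma Fe_car: "Fe k n e v \<in> carO n" by (simp add: Fe_def carO_def)

fun ckf :: "(nat \<Rightarrow> real) \<Rightarrow> nat \<Rightarrow> (nat \<Rightarrow> nat \<Rightarrow> complex) \<Rightarrow> nat \<Rightarrow> nat \<Rightarrow> nat \<Rightarrow> nat \<Rightarrow> complex" where
  "ckf k n g 0 j a b = (if j < 2 \<and> a + b = n then g j b else 0)"
| "ckf k n g (Suc c) j a b = (if j = 0 then - (br k 1 (a+1) * ckf k n g c 1 (a+1) b - \<i> * br k 2 (b+1) * ckf k n g c 1 a (b+1)) / br k 3 (c+1)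
     else if j = 1 then (br k 1 (a+1) * ckf k n g c 0 (a+1) b + \<i> * br k 2 (b+1) * ckf k n g c 0 a (b+1)) / br k 3 (c+1) else 0)"

definition ckv :: "(nat \<Rightarrow> real) \<Rightarrow> nat \<Rightarrow> (nat \<Rightarrow> nat \<Rightarrow> complex) \<Rightarrow> spoly" where
  "ckv k n g = (\<lambda>(j, a, b, c). ckf k n g c j a b)"

lemma ckv_apply: "ckv k n g (j, (a, b, c)) = ckf k n g c j a b" by (simp add: ckv_def)

lemma ck_hom: "ckf k n g c j a b \<noteq> 0 \<Longrightarrow> j < 2 \<and> a + b + c = n"
proof (induction c arbitrary: j a b)
  case 0 then show ?case by (auto split: if_splits)
next
  case (Suc c)
  show ?case
  proof (cases "j < 2")
    case False then show ?thesis using Suc.prems by simp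
  next
    case True
    have "ckf k n g c (1 - j) (a+1) b \<noteq> 0 \<or> ckf k n g c (1 - j) a (b+1) \<noteq> 0"
    proof (rule ccontr)
      assume "\<not> ?thesis"
      then show False using Suc.prems True by (auto simp: less_2_cases_iff)
    qed
    then show ?thesis using Suc.IH True by fastforce
  qed
qed

definition Fmap :: "(nat \<Rightarrow> real) \<Rightarrow> nat \<Rightarrow> spoly \<Rightarrow> (bool \<times> nat \<Rightarrow> complex)" where
  "Fmap k n v = (\<lambda>(bo, t). Fe k n (if bo then 0 else 1) v t)"

lemma Fmap_slices: "(\<lambda>i. Fmap k n v (True, i)) = Fe k n 0 v" "(\<lambda>i. Fmap k n v (False, i)) = Fe k n 1 v"
  by (simp_all add: Fmap_def)

lemma Fmap_lc: "Fmap k n (lc p u q w) = lc p (Fmap k n u) q (Fmap k n w)"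
  by (auto simp: Fmap_def Fe_def lc_def fun_eq_iff add_divide_distrib)

lemma Mn_D: "v \<in> Mn k n \<Longrightarrow> Dop k v = (\<lambda>_. 0)" by (simp add: Mn_def)
lemma Mn_H: "v \<in> Mn k n \<Longrightarrow> (j \<ge> 2 \<or> a + b + c \<noteq> n) \<Longrightarrow> v (j, (a, b, c)) = 0"
  by (auto simp: Mn_def Hn_def)

context
  fixes k :: "nat \<Rightarrow> real" and n :: nat
  assumes n_even: "even n"
begin

definition "aW = complex_of_real (k 2 + k 3 + (real n + 1) / 2)"
definition "bW = complex_of_real (- k 1 - k 3 - (real n + 1) / 2)"
definition "cW = complex_of_real (- k 1 - k 2 - (real n + 1) / 2)"

lemma thW: "Otheta n aW t = (-1)^t * (of_nat t + complex_of_real (k 2) + complex_of_real (k 3) + 1/2)"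
  by (simp add: Otheta_def aW_def field_simps)

lemma thbW: "t \<le> n \<Longrightarrow> Otheta n bW t = - ((-1)^t * (of_nat (n - t) + complex_of_real (k 1) + complex_of_real (k 3) + 1/2))"
  by (simp add: Otheta_def bW_def field_simps of_nat_diff)

lemma phW: "1 \<le> t \<Longrightarrow> t \<le> Suc n \<Longrightarrow> Ophi n aW bW cW t = br k 1 (Suc n - t) * br k 2 t"
proof -
  assume t: "1 \<le> t" "t \<le> Suc n"
  have p: "(-1::complex)^(Suc n - t) = - ((-1)^t)"
  proof -
    have "(-1::complex)^(Suc n - t) * (-1)^t = (-1)^(Suc n)" using t by (simp add: power_add[symmetric])
    then show ?thesis using n_even by (simp add: minus_one_power_iff split: if_splits)
  qed
  show ?thesis using t p
    by (cases "even t") (simp_all add: Ophi_def aW_def bW_def cW_def br_def minus_one_power_iff of_nat_diff field_simps)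
qed

lemma z0W: "t \<le> n \<Longrightarrow> z0 n aW bW cW t = - (1/2 + (complex_of_real (k 1) + complex_of_real (k 2)) * (-1)^t)"
proof -
  assume t: "t \<le> n"
  show ?thesis
  proof (cases "t = n")
    case True
    then show ?thesis using n_even
      by (simp add: z0_def Otheta_def Ophi_def aW_def bW_def cW_def minus_one_power_iff field_simps)
  next
    case False
    then have t1: "Suc t \<le> n" using t by simp
    show ?thesis using n_even t t1
      by (cases "even t") (simp_all add: z0_def Otheta_def Ophi_def aW_def bW_def cW_def minus_one_power_iff of_nat_diff field_simps)
  qed
qed

lemma m1_diff_Suc: "t < n \<Longrightarrow> (-1::complex)^(n - Suc t) = - ((-1)^t)"
proof -
  assume t: "t < n"
  have "even (n - Suc t) = odd t" using n_even t by presburger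
  then show ?thesis by (simp add: minus_one_power_iff)
qed

lemma DX0: assumes D: "Dop k v = (\<lambda>_. 0)" and t: "t \<le> n"
  shows "BIgen k 1 2 3 v (0, (n - t, t, 0)) = Otheta n aW t * v (0, (n - t, t, 0))
     + (if 1 \<le> t then alph k n 0 (t - 1) * v (0, (n - (t - 1), t - 1, 0)) else 0)"
proof (cases t)
  case 0 then show ?thesis using X_raw_0[of k v 0 n] by (simp add: thW algebra_simps)
next
  case (Suc s)
  have n1: "n - Suc s + 1 = n - s" using t Suc by simp
  have "BIgen k 1 2 3 v (0, (n - t, t, 0)) = \<i> * ((-1)^s * (br k 1 (n - s) * v (0, (n - s, s, 0)) + \<i> * br k 2 (s+1) * v (0, (n - Suc s, s+1, 0))))
      + (- ((-1)^s) / 2 + complex_of_real (k 2) - complex_of_real (k 3) * (-1)^s) * v (0, (n - Suc s, Suc s, 0))"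
    unfolding Suc X_raw0 D1[OF D] n1 by simp
  then show ?thesis using Suc
    by (cases "even s") (simp_all add: thW alph_def eps_def br_def minus_one_power_iff algebra_simps)
qed

lemma DX1: assumes D: "Dop k v = (\<lambda>_. 0)" and t: "t \<le> n"
  shows "BIgen k 1 2 3 v (1, (n - t, t, 0)) = Otheta n aW t * v (1, (n - t, t, 0))
     + (if 1 \<le> t then alph k n 1 (t - 1) * v (1, (n - (t - 1), t - 1, 0)) else 0)"
proof (cases t)
  case 0 then show ?thesis using X_raw_0[of k v 1 n] by (simp add: thW algebra_simps)
next
  case (Suc s)
  have n1: "n - Suc s + 1 = n - s" using t Suc by simp
  have "BIgen k 1 2 3 v (1, (n - t, t, 0)) = \<i> * ((-1)^s * (- (br k 1 (n - s) * v (1, (n - s, s, 0))) + \<i> * br k 2 (s+1) * v (1, (n - Suc s, s+1, 0))))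
      + (- ((-1)^s) / 2 + complex_of_real (k 2) - complex_of_real (k 3) * (-1)^s) * v (1, (n - Suc s, Suc s, 0))"
    unfolding Suc X_raw1 D0[OF D] n1 by simp
  then show ?thesis using Suc
    by (cases "even s") (simp_all add: thW alph_def eps_def br_def minus_one_power_iff algebra_simps)
qed

lemma DY0: assumes D: "Dop k v = (\<lambda>_. 0)" and t: "t \<le> n"
  shows "BIgen k 2 3 1 v (0, (n - t, t, 0)) = - Otheta n bW t * v (0, (n - t, t, 0))
     + (if t < n then bet k 0 t * v (0, (n - (t + 1), t + 1, 0)) else 0)"
proof (cases "t = n")
  case True then show ?thesis using n_even Y_raw_0[of k v 0 n] by (simp add: thbW algebra_simps)
next
  case False
  then have tn: "t < n" using t by simp
  then obtain s where s: "n - t = Suc s" by (metis Suc_diff_Suc)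
  have s2: "s = n - Suc t" "s + 1 = n - t" using s tn by auto
  have p: "(-1::complex)^s = - ((-1)^t)" using m1_diff_Suc[OF tn] s2 by simp
  have p2: "(-1::complex)^(n - t) = (-1)^t" by (rule m1_diff[OF n_even t])
  have "BIgen k 2 3 1 v (0, (n - t, t, 0)) = - ((-1)^s * (br k 1 (n - t) * v (0, (n - t, t, 0)) + \<i> * br k 2 (t+1) * v (0, (n - Suc t, t+1, 0))))
      + (- ((-1)^s) / 2 - complex_of_real (k 3) * (-1)^s + complex_of_real (k 1)) * v (0, (n - t, t, 0))"
    unfolding s Y_raw0 D1[OF D] s2 by simp
  then show ?thesis using tn p p2 t
    by (cases "even t") (simp_all add: thbW bet_def eps_def br_def minus_one_power_iff of_nat_diff algebra_simps)
qed

lemma DY1: assumes D: "Dop k v = (\<lambda>_. 0)" and t: "t \<le> n"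
  shows "BIgen k 2 3 1 v (1, (n - t, t, 0)) = - Otheta n bW t * v (1, (n - t, t, 0))
     + (if t < n then bet k 1 t * v (1, (n - (t + 1), t + 1, 0)) else 0)"
proof (cases "t = n")
  case True then show ?thesis using n_even Y_raw_0[of k v 1 n] by (simp add: thbW algebra_simps)
next
  case False
  then have tn: "t < n" using t by simp
  then obtain s where s: "n - t = Suc s" by (metis Suc_diff_Suc)
  have s2: "s = n - Suc t" "s + 1 = n - t" using s tn by auto
  have p: "(-1::complex)^s = - ((-1)^t)" using m1_diff_Suc[OF tn] s2 by simp
  have p2: "(-1::complex)^(n - t) = (-1)^t" by (rule m1_diff[OF n_even t])
  have "BIgen k 2 3 1 v (1, (n - t, t, 0)) = ((-1)^s * (- (br k 1 (n - t) * v (1, (n - t, t, 0))) + \<i> * br k 2 (t+1) * v (1, (n - Suc t, t+1, 0))))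
      + (- ((-1)^s) / 2 - complex_of_real (k 3) * (-1)^s + complex_of_real (k 1)) * v (1, (n - t, t, 0))"
    unfolding s Y_raw1 D0[OF D] s2 by simp
  then show ?thesis using tn p p2 t
    by (cases "even t") (simp_all add: thbW bet_def eps_def br_def minus_one_power_iff of_nat_diff algebra_simps)
qed

lemma DZ0: assumes t: "t \<le> n"
  shows "BIgen k 3 1 2 v (0, (n - t, t, 0)) = - z0 n aW bW cW t * v (0, (n - t, t, 0))
     + (if 1 \<le> t then \<i> * eps 0 * br k 1 (n - (t - 1)) * v (0, (n - (t - 1), t - 1, 0)) else 0)
     + (if t < n then - \<i> * eps 0 * br k 2 (t + 1) * v (0, (n - (t + 1), t + 1, 0)) else 0)"
proof -
  have p1: "(-1::complex)^(n - t + t) = 1" using t n_even by simp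
  have p2: "(-1::complex)^(n - t) = (-1)^t" by (rule m1_diff[OF n_even t])
  have e1: "1 \<le> t \<Longrightarrow> n - t + 1 = n - (t - 1)" using t by simp
  have e2: "n - t - 1 = n - (t + 1)" by simp
  have e3: "(1 \<le> n - t) = (t < n)" by auto
  show ?thesis unfolding Z_raw0 p1 p2 e2 e3 using e1 t
    by (auto simp: z0W eps_def algebra_simps)
qed

lemma DZ1: assumes t: "t \<le> n"
  shows "BIgen k 3 1 2 v (1, (n - t, t, 0)) = - z0 n aW bW cW t * v (1, (n - t, t, 0))
     + (if 1 \<le> t then \<i> * eps 1 * br k 1 (n - (t - 1)) * v (1, (n - (t - 1), t - 1, 0)) else 0)
     + (if t < n then - \<i> * eps 1 * br k 2 (t + 1) * v (1, (n - (t + 1), t + 1, 0)) else 0)"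
proof -
  have p1: "(-1::complex)^(n - t + t) = 1" using t n_even by simp
  have p2: "(-1::complex)^(n - t) = (-1)^t" by (rule m1_diff[OF n_even t])
  have e1: "1 \<le> t \<Longrightarrow> n - t + 1 = n - (t - 1)" using t by simp
  have e2: "n - t - 1 = n - (t + 1)" by simp
  have e3: "(1 \<le> n - t) = (t < n)" by auto
  show ?thesis unfolding Z_raw1 p1 p2 e2 e3 using e1 t
    by (auto simp: z0W eps_def algebra_simps)
qed

lemma DXe: "Dop k v = (\<lambda>_. 0) \<Longrightarrow> t \<le> n \<Longrightarrow> e < 2 \<Longrightarrow> BIgen k 1 2 3 v (e, (n - t, t, 0)) = Otheta n aW t * v (e, (n - t, t, 0))
     + (if 1 \<le> t then alph k n e (t - 1) * v (e, (n - (t - 1), t - 1, 0)) else 0)"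
  using DX0 DX1 by (cases "e = 0") (auto simp: less_2_cases_iff)

lemma DYe: "Dop k v = (\<lambda>_. 0) \<Longrightarrow> t \<le> n \<Longrightarrow> e < 2 \<Longrightarrow> BIgen k 2 3 1 v (e, (n - t, t, 0)) = - Otheta n bW t * v (e, (n - t, t, 0))
     + (if t < n then bet k e t * v (e, (n - (t + 1), t + 1, 0)) else 0)"
  using DY0 DY1 by (cases "e = 0") (auto simp: less_2_cases_iff)

lemma DZe: "t \<le> n \<Longrightarrow> e < 2 \<Longrightarrow> BIgen k 3 1 2 v (e, (n - t, t, 0)) = - z0 n aW bW cW t * v (e, (n - t, t, 0))
     + (if 1 \<le> t then \<i> * eps e * br k 1 (n - (t - 1)) * v (e, (n - (t - 1), t - 1, 0)) else 0)
     + (if t < n then - \<i> * eps e * br k 2 (t + 1) * v (e, (n - (t + 1), t + 1, 0)) else 0)"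
  using DZ0 DZ1 by (cases "e = 0") (auto simp: less_2_cases_iff)

context
  assumes tp: "ereal (real n) < min (tpar (k 1)) (min (tpar (k 2)) (tpar (k 3)))"
begin

lemma tp1: "ereal (real n) < tpar (k 1)" using tp by simp
lemma tp2: "ereal (real n) < tpar (k 2)" using tp by simp
lemma tp3: "ereal (real n) < tpar (k 3)" using tp by simp

lemma FX: assumes D: "Dop k v = (\<lambda>_. 0)" and e: "e < 2"
  shows "Fe k n e (BIgen k 1 2 3 v) = OX n aW (Fe k n e v)"
proof
  fix t
  show "Fe k n e (BIgen k 1 2 3 v) t = OX n aW (Fe k n e v) t"
  proof (cases "t \<le> n")
    case False then show ?thesis by (simp add: Fe_def OX_def)
  next
    case True
    show ?thesis
    proof (cases t)
      case 0 then show ?thesis using DXe[OF D True e] by (simp add: Fe_def OX_def)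
    next
      case (Suc s)
      have g: "gam k n e s \<noteq> 0" using gam_nz[where n=n and k=k and t=s and e=e, OF tp1] True Suc by simp
      have al: "alph k n e s \<noteq> 0" using alph_nz[where n=n and k=k and t=s and e=e, OF tp1] True Suc by simp
      have "Fe k n e (BIgen k 1 2 3 v) t = (Otheta n aW t * v (e, (n - t, t, 0)) + alph k n e s * v (e, (n - s, s, 0))) / (gam k n e s * alph k n e s)"
        using DXe[OF D True e] Suc True by (simp add: Fe_def)
      also have "\<dots> = Otheta n aW t * (v (e, (n - t, t, 0)) / (gam k n e s * alph k n e s)) + v (e, (n - s, s, 0)) / gam k n e s"
        using g al by (simp add: field_simps)
      also have "\<dots> = OX n aW (Fe k n e v) t" using Suc True by (simp add: Fe_def OX_def)
      finally show ?thesis .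
    qed
  qed
qed

lemma ii: "\<i> * x * (\<i> * y) = - (x * (y::complex))"
  by (metis complex_i_mult_minus mult.assoc mult.left_commute)

lemma sq1: "(-1::complex)^t * (-1)^t = 1" by (simp add: power_add[symmetric])
lemma eps_sq: "eps e * eps e = 1" by (simp add: eps_def)

lemma FY: assumes D: "Dop k v = (\<lambda>_. 0)" and e: "e < 2"
  shows "Fe k n e (BIgen k 2 3 1 v) = (\<lambda>i. - OY n aW bW cW (Fe k n e v) i)"
proof
  fix t
  show "Fe k n e (BIgen k 2 3 1 v) t = - OY n aW bW cW (Fe k n e v) t"
  proof (cases "t \<le> n")
    case False then show ?thesis by (simp add: Fe_def OY_def)
  next
    case True
    have OYt: "OY n aW bW cW (Fe k n e v) t = Otheta n bW t * Fe k n e v t + Ophi n aW bW cW (Suc t) * Fe k n e v (Suc t)"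
      by (rule OY_at[OF Fe_car True])
    have g: "gam k n e t \<noteq> 0" using gam_nz[where n=n and k=k and t=t and e=e, OF tp1 True] by simp
    show ?thesis
    proof (cases "t = n")
      case True
      then show ?thesis using DYe[OF D _ e, of t] OYt g by (simp add: Fe_def)
    next
      case False
      then have tn: "t < n" using True by simp
      have al: "alph k n e t \<noteq> 0" using alph_nz[where n=n and k=k and t=t and e=e, OF tp1 tn] by simp
      have ph: "Ophi n aW bW cW (Suc t) = br k 1 (n - t) * br k 2 (t + 1)" using phW[of "Suc t"] tn by simp
      have ab: "alph k n e t * bet k e t = - (br k 1 (n - t) * br k 2 (t + 1))"
        unfolding alph_def bet_def
        by (cases "e = 0"; cases "even t") (simp_all add: eps_def minus_one_power_iff ii)
      have ph2: "Ophi n aW bW cW (Suc t) = - (alph k n e t * bet k e t)" using ph ab by simp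
      have "Fe k n e (BIgen k 2 3 1 v) t = (- Otheta n bW t * v (e, (n - t, t, 0)) + bet k e t * v (e, (n - (t + 1), t + 1, 0))) / gam k n e t"
        using DYe[OF D True e] tn True by (simp add: Fe_def)
      also have "\<dots> = - (Otheta n bW t * (v (e, (n - t, t, 0)) / gam k n e t) + Ophi n aW bW cW (Suc t) * (v (e, (n - (t + 1), t + 1, 0)) / (gam k n e t * alph k n e t)))"
        unfolding ph2 using g al by (simp add: field_simps)
      also have "\<dots> = - OY n aW bW cW (Fe k n e v) t" using OYt tn True by (simp add: Fe_def)
      finally show ?thesis .
    qed
  qed
qed

lemma FZ: assumes e: "e < 2"
  shows "Fe k n e (BIgen k 3 1 2 v) = (\<lambda>i. - ZO n aW bW cW (Fe k n e v) i)"
proof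
  fix t
  show "Fe k n e (BIgen k 3 1 2 v) t = - ZO n aW bW cW (Fe k n e v) t"
  proof (cases "t \<le> n")
    case False
    have "ZO n aW bW cW (Fe k n e v) t = 0" using ZO_out[OF Fe_car] False by simp
    then show ?thesis using False by (simp add: Fe_def)
  next
    case True
    have ZOt: "ZO n aW bW cW (Fe k n e v) t = z0 n aW bW cW t * Fe k n e v t + (if 1 \<le> t then (-1)^t * Fe k n e v (t - 1) else 0)
          - (-1)^t * Ophi n aW bW cW (Suc t) * Fe k n e v (Suc t)"
      by (rule ZO_at[OF n_even Fe_car True])
    have g: "gam k n e t \<noteq> 0" using gam_nz[where n=n and k=k and t=t and e=e, OF tp1 True] by simp
    have LZ: "Fe k n e (BIgen k 3 1 2 v) t = (- z0 n aW bW cW t * v (e, (n - t, t, 0))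
     + (if 1 \<le> t then \<i> * eps e * br k 1 (n - (t - 1)) * v (e, (n - (t - 1), t - 1, 0)) else 0)
     + (if t < n then - \<i> * eps e * br k 2 (t + 1) * v (e, (n - (t + 1), t + 1, 0)) else 0)) / gam k n e t"
      using DZe[OF True e] True by (simp add: Fe_def)
    define A where "A = (if 1 \<le> t then \<i> * eps e * br k 1 (n - (t - 1)) * v (e, (n - (t - 1), t - 1, 0)) / gam k n e t else 0)"
    define B where "B = (if t < n then - \<i> * eps e * br k 2 (t + 1) * v (e, (n - (t + 1), t + 1, 0)) / gam k n e t else 0)"
    define A' where "A' = (if 1 \<le> t then (-1)^t * Fe k n e v (t - 1) else 0)"
    define B' where "B' = (-1)^t * Ophi n aW bW cW (Suc t) * Fe k n e v (Suc t)"
    have L2: "Fe k n e (BIgen k 3 1 2 v) t = - z0 n aW bW cW t * (v (e, (n - t, t, 0)) / gam k n e t) + A + B"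
      unfolding LZ A_def B_def using g by (simp add: field_simps)
    have R2: "- ZO n aW bW cW (Fe k n e v) t = - z0 n aW bW cW t * (v (e, (n - t, t, 0)) / gam k n e t) - A' + B'"
      unfolding ZOt A'_def B'_def using True by (simp add: Fe_def)
    have AA: "A = - A'"
    proof (cases t)
      case 0 then show ?thesis by (simp add: A_def A'_def)
    next
      case (Suc s)
      have g': "gam k n e s \<noteq> 0" using gam_nz[where n=n and k=k and t=s and e=e, OF tp1] True Suc by simp
      have b1: "br k 1 (n - s) \<noteq> 0" using br_nz[where n=n and k=k and i=1 and m="n - s", OF tp1] True Suc by simp
      show ?thesis using g' b1 Suc True
        by (cases "e = 0"; cases "even s") (simp_all add: A_def A'_def Fe_def alph_def eps_def minus_one_power_iff field_simps)
    qed
    have BB: "B = B'"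
    proof (cases "t < n")
      case False
      then have "t = n" using True by simp
      then show ?thesis by (simp add: B_def B'_def Fe_def)
    next
      case tn: True
      have b1: "br k 1 (n - t) \<noteq> 0" using br_nz[where n=n and k=k and i=1 and m="n - t", OF tp1] tn by simp
      have ph: "Ophi n aW bW cW (Suc t) = br k 1 (n - t) * br k 2 (t + 1)" using phW[of "Suc t"] tn by simp
      show ?thesis using g b1 tn ph
        by (cases "e = 0"; cases "even t") (simp_all add: B_def B'_def Fe_def alph_def eps_def minus_one_power_iff field_simps)
    qed
    show ?thesis using L2 R2 AA BB by simp
  qed
qed

lemma Fmap_inj: "inj_on (Fmap k n) (Mn k n)"
proof (rule inj_onI)
  fix v v' assume v: "v \<in> Mn k n" and v': "v' \<in> Mn k n" and eq: "Fmap k n v = Fmap k n v'"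
  have Fe_eq: "Fe k n j v = Fe k n j v'" if "j < 2" for j
    using Fmap_slices[of k n v] Fmap_slices[of k n v'] eq that by (auto simp: less_2_cases_iff)
  have lev: "\<forall>j a b. v (j, (a, b, c)) = v' (j, (a, b, c))" for c
  proof (induction c)
    case 0
    show ?case
    proof (intro allI)
      fix j a b
      show "v (j, (a, b, 0)) = v' (j, (a, b, 0))"
      proof (cases "j < 2 \<and> a + b = n")
        case False then show ?thesis using Mn_H[OF v, of j a b 0] Mn_H[OF v', of j a b 0] by auto
      next
        case True
        then have bn: "b \<le> n" "a = n - b" by auto
        have "Fe k n j v b = Fe k n j v' b" using Fe_eq True by simp
        moreover have "gam k n j b \<noteq> 0" using gam_nz[where n=n and k=k and t=b and e=j, OF tp1 bn(1)] by simp
        ultimately show ?thesis using bn by (simp add: Fe_def)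
      qed
    qed
  next
    case (Suc c)
    show ?case
    proof (intro allI)
      fix j a b
      show "v (j, (a, b, Suc c)) = v' (j, (a, b, Suc c))"
      proof (cases "j < 2 \<and> a + b + Suc c = n")
        case False then show ?thesis using Mn_H[OF v, of j a b "Suc c"] Mn_H[OF v', of j a b "Suc c"] by auto
      next
        case True
        have b3: "br k 3 (c + 1) \<noteq> 0" using br_nz[where n=n and k=k and i=3 and m="c+1", OF tp3] True by simp
        have D: "Dop k v (j, (a, b, c)) = Dop k v' (j, (a, b, c))" using Mn_D[OF v] Mn_D[OF v'] by simp
        show ?thesis
        proof (cases "j = 0")
          case True
          then have "br k 3 (c + 1) * v (0, (a, b, c + 1)) = br k 3 (c + 1) * v' (0, (a, b, c + 1))"
            using D Suc.IH by (simp only: Dop0) simp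
          then show ?thesis using b3 True by simp
        next
          case False
          then have j1: "j = 1" using \<open>j < 2 \<and> a + b + Suc c = n\<close> by simp
          have D1': "Dop k v (1, (a, b, c)) = Dop k v' (1, (a, b, c))" using Mn_D[OF v] Mn_D[OF v'] by simp
          have "br k 3 (c + 1) * v (1, (a, b, c + 1)) = br k 3 (c + 1) * v' (1, (a, b, c + 1))"
            using D1' Suc.IH by (simp only: Dop1) simp
          then show ?thesis using b3 j1 by simp
        qed
      qed
    qed
  qed
  show "v = v'"
  proof
    fix p :: "nat \<times> mono"
    obtain j a b c where "p = (j, (a, b, c))" by (metis prod.exhaust)
    then show "v p = v' p" using lev by simp
  qed
qed

lemma ck_Mn: "ckv k n g \<in> Mn k n"
proof -
  have H: "ckv k n g \<in> Hn n"
    unfolding Hn_def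
  proof (intro CollectI allI impI)
    fix j :: nat and m :: mono assume h: "2 \<le> j \<or> total m \<noteq> n"
    obtain a b c where m: "m = (a, b, c)" by (metis prod.exhaust)
    show "ckv k n g (j, m) = 0"
    proof (rule ccontr)
      assume "ckv k n g (j, m) \<noteq> 0"
      then have "ckf k n g c j a b \<noteq> 0" using m by (simp add: ckv_apply)
      then show False using ck_hom[of k n g c j a b] h m by simp
    qed
  qed
  have D: "Dop k (ckv k n g) = (\<lambda>_. 0)"
  proof
    fix p :: "nat \<times> mono"
    obtain j a b c where p: "p = (j, (a, b, c))" by (metis prod.exhaust)
    show "Dop k (ckv k n g) p = 0"
    proof (cases "br k 3 (c + 1) = 0")
      case True
      then have big: "n < c + 1" using br_zero_big[where n=n and k=k and i=3 and m="c+1", OF tp3] by simp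
      have z1: "ckf k n g c jj (aa + 1) bb = 0" for jj aa bb
      proof (rule ccontr)
        assume "ckf k n g c jj (aa + 1) bb \<noteq> 0"
        then have "aa + 1 + bb + c = n" using ck_hom by blast
        then show False using big by simp
      qed
      have z2: "ckf k n g c jj aa (bb + 1) = 0" for jj aa bb
      proof (rule ccontr)
        assume "ckf k n g c jj aa (bb + 1) \<noteq> 0"
        then have "aa + (bb + 1) + c = n" using ck_hom by blast
        then show False using big by simp
      qed
      note z = z1 z2
      show ?thesis
      proof (cases "j < 2")
        case True
        show ?thesis
        proof (cases "j = 0")
          case True then show ?thesis using p z \<open>br k 3 (c + 1) = 0\<close> by (simp add: Dop0 ckv_apply)
        next
          case False
          then have j1: "j = 1" using \<open>j < 2\<close> by simp
          show ?thesis unfolding p j1 Dop1 using z \<open>br k 3 (c + 1) = 0\<close> by (simp add: ckv_apply)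
        qed
      next
        case False then show ?thesis using p by (simp add: Dop2)
      qed
    next
      case False
      show ?thesis
      proof (cases "j < 2")
        case True
        show ?thesis
        proof (cases "j = 0")
          case True then show ?thesis using p False by (simp add: Dop0 ckv_apply field_simps)
        next
          case nz: False
          then have j1: "j = 1" using \<open>j < 2\<close> by simp
          show ?thesis unfolding p j1 Dop1 using False by (simp add: ckv_apply field_simps)
        qed
      next
        case nj: False then show ?thesis using p by (simp add: Dop2)
      qed
    qed
  qed
  show ?thesis using H D by (simp add: Mn_def)
qed

lemma Wf: "car (twist_1m1 (Omod n aW bW cW)) = carO n" "opX (twist_1m1 (Omod n aW bW cW)) = OX n aW"
  "opY (twist_1m1 (Omod n aW bW cW)) = (\<lambda>v i. - OY n aW bW cW v i)"
  "opZ (twist_1m1 (Omod n aW bW cW)) = (\<lambda>v i. - ZO n aW bW cW v i)"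
  by (simp_all add: twist_1m1_def car_Omod opX_Omod opY_Omod opZ_Omod)

lemma Mf: "car (Mmod k n) = Mn k n" "opX (Mmod k n) = BIgen k 1 2 3" "opY (Mmod k n) = BIgen k 2 3 1" "opZ (Mmod k n) = BIgen k 3 1 2"
  by (simp_all add: Mmod_def)

theorem part1: "bi_iso (Mmod k n) (dsum (twist_1m1 (Omod n aW bW cW)) (twist_1m1 (Omod n aW bW cW)))"
proof -
  let ?W = "twist_1m1 (Omod n aW bW cW)"
  have carD: "car (dsum ?W ?W) = {w. (\<lambda>i. w (True, i)) \<in> carO n \<and> (\<lambda>i. w (False, i)) \<in> carO n}"
    by (simp add: dsum_def Wf)
  have img: "Fmap k n ` Mn k n = car (dsum ?W ?W)"
  proof
    show "Fmap k n ` Mn k n \<subseteq> car (dsum ?W ?W)"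
      unfolding carD using Fmap_slices Fe_car by auto
  next
    show "car (dsum ?W ?W) \<subseteq> Fmap k n ` Mn k n"
    proof
      fix w assume "w \<in> car (dsum ?W ?W)"
      then have w1: "\<forall>i>n. w (True, i) = 0" and w2: "\<forall>i>n. w (False, i) = 0" unfolding carD by (auto simp: carO_def)
      define g :: "nat \<Rightarrow> nat \<Rightarrow> complex" where "g = (\<lambda>j b. if j = 0 then w (True, b) * gam k n 0 b else w (False, b) * gam k n 1 b)"
      have "Fmap k n (ckv k n g) = w"
      proof
        fix p :: "bool \<times> nat"
        obtain bo t where p: "p = (bo, t)" by (metis prod.exhaust)
        show "Fmap k n (ckv k n g) p = w p"
        proof (cases "t \<le> n")
          case True
          have g0: "gam k n 0 t \<noteq> 0" "gam k n 1 t \<noteq> 0"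
            using gam_nz[where n=n and k=k and t=t, OF tp1 True] by auto
          show ?thesis using True g0 p by (cases bo) (simp_all add: Fmap_def Fe_def ckv_apply g_def)
        next
          case False then show ?thesis using p w1 w2 by (cases bo) (simp_all add: Fmap_def Fe_def)
        qed
      qed
      then show "w \<in> Fmap k n ` Mn k n" using ck_Mn by (metis image_eqI)
    qed
  qed
  show ?thesis
    unfolding bi_iso_def
  proof (intro exI conjI)
    show "clinear_on (car (Mmod k n)) (Fmap k n)" by (simp add: clinear_on_def Fmap_lc)
    show "bij_betw (Fmap k n) (car (Mmod k n)) (car (dsum ?W ?W))"
      unfolding bij_betw_def Mf using Fmap_inj img by simp
    show "\<forall>v\<in>car (Mmod k n). Fmap k n (opX (Mmod k n) v) = opX (dsum ?W ?W) (Fmap k n v) \<and>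
        Fmap k n (opY (Mmod k n) v) = opY (dsum ?W ?W) (Fmap k n v) \<and>
        Fmap k n (opZ (Mmod k n) v) = opZ (dsum ?W ?W) (Fmap k n v)"
    proof (intro ballI conjI)
      fix v assume "v \<in> car (Mmod k n)"
      then have D: "Dop k v = (\<lambda>_. 0)" by (simp add: Mf Mn_D)
      have X0: "Fe k n 0 (BIgen k 1 2 3 v) = OX n aW (Fe k n 0 v)" by (rule FX[OF D]) simp
      have X1: "Fe k n 1 (BIgen k 1 2 3 v) = OX n aW (Fe k n 1 v)" by (rule FX[OF D]) simp
      have Y0: "Fe k n 0 (BIgen k 2 3 1 v) = (\<lambda>i. - OY n aW bW cW (Fe k n 0 v) i)" by (rule FY[OF D]) simp
      have Y1: "Fe k n 1 (BIgen k 2 3 1 v) = (\<lambda>i. - OY n aW bW cW (Fe k n 1 v) i)" by (rule FY[OF D]) simp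
      have Z0: "Fe k n 0 (BIgen k 3 1 2 v) = (\<lambda>i. - ZO n aW bW cW (Fe k n 0 v) i)" by (rule FZ) simp
      have Z1: "Fe k n 1 (BIgen k 3 1 2 v) = (\<lambda>i. - ZO n aW bW cW (Fe k n 1 v) i)" by (rule FZ) simp
      show "Fmap k n (opX (Mmod k n) v) = opX (dsum ?W ?W) (Fmap k n v)"
        unfolding Mf by (auto simp: dsum_def Wf Fmap_slices fun_eq_iff Fmap_def X0[simplified] X1[simplified])
      show "Fmap k n (opY (Mmod k n) v) = opY (dsum ?W ?W) (Fmap k n v)"
        unfolding Mf by (auto simp: dsum_def Wf Fmap_slices fun_eq_iff Fmap_def Y0[simplified] Y1[simplified])
      show "Fmap k n (opZ (Mmod k n) v) = opZ (dsum ?W ?W) (Fmap k n v)"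
        unfolding Mf by (auto simp: dsum_def Wf Fmap_slices fun_eq_iff Fmap_def Z0[simplified] Z1[simplified])
    qed
  qed
qed

end

end


lemma Otheta_real: "Otheta n (complex_of_real x) j = complex_of_real ((-1)^j * (2*x - real n + 2*real j)/2)"
  by (simp add: Otheta_def)

lemma Ophi_real: "Ophi n (complex_of_real x) (complex_of_real y) (complex_of_real z) j = complex_of_real
   (if even j then real j * (real n + 1 - 2 * real j - 2*x - 2*y - 2*z)/2 else (real j - real n - 1) * (real n + 1 - 2 * real j - 2*x - 2*y + 2*z)/2)"
  by (simp add: Ophi_def)

lemma br_pos: "0 \<le> k i \<Longrightarrow> 1 \<le> m \<Longrightarrow> br k i m \<noteq> 0"
proof
  assume h: "0 \<le> k i" "1 \<le> m" "br k i m = 0"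
  have "br k i m = complex_of_real (real m + k i * (1 - (-1)^m))" by (simp add: br_def)
  then have "real m + k i * (1 - (-1)^m) = 0" using h(3) by (metis of_real_eq_0_iff)
  moreover have "0 \<le> k i * (1 - (-1)^m)" using h(1) by (cases "even m") simp_all
  ultimately show False using h(2) by simp
qed

theorem theorem6p6:
  fixes k :: "nat \<Rightarrow> real" and n :: nat
  assumes "even n"
    and "ereal (real n) < min (tpar (k 1)) (min (tpar (k 2)) (tpar (k 3)))"
  defines "W \<equiv> twist_1m1 (Omod n
             (complex_of_real (k 2 + k 3 + (real n + 1) / 2))
             (complex_of_real (- k 1 - k 3 - (real n + 1) / 2))
             (complex_of_real (- k 1 - k 2 - (real n + 1) / 2)))"
  shows "bi_iso (Mmod k n) (dsum W W)
     \<and> (k 1 \<ge> 0 \<and> k 2 \<ge> 0 \<and> k 3 \<ge> 0 \<longrightarrow>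
          bi_irreducible W \<and>
          bi_iso W (Omod n
             (complex_of_real (k 2 + k 3 + (real n + 1) / 2))
             (complex_of_real (k 1 + k 3 + (real n + 1) / 2))
             (complex_of_real (k 1 + k 2 + (real n + 1) / 2))))"
proof
  have Weq: "W = twist_1m1 (Omod n (aW k n) (bW k n) (cW k n))"
    unfolding W_def by (simp add: aW_def[OF assms(1)] bW_def[OF assms(1)] cW_def[OF assms(1)])
  show "bi_iso (Mmod k n) (dsum W W)" unfolding Weq by (rule part1[OF assms(1,2)])
  show "k 1 \<ge> 0 \<and> k 2 \<ge> 0 \<and> k 3 \<ge> 0 \<longrightarrow> bi_irreducible W \<and>
          bi_iso W (Omod n
             (complex_of_real (k 2 + k 3 + (real n + 1) / 2))
             (complex_of_real (k 1 + k 3 + (real n + 1) / 2))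
             (complex_of_real (k 1 + k 2 + (real n + 1) / 2)))"
  proof
    assume kp: "k 1 \<ge> 0 \<and> k 2 \<ge> 0 \<and> k 3 \<ge> 0"
    define a where "a = complex_of_real (k 2 + k 3 + (real n + 1) / 2)"
    define b where "b = complex_of_real (- k 1 - k 3 - (real n + 1) / 2)"
    define c where "c = complex_of_real (- k 1 - k 2 - (real n + 1) / 2)"
    have mb: "- b = complex_of_real (k 1 + k 3 + (real n + 1) / 2)" unfolding b_def
      by (simp add: algebra_simps)
    have mc: "- c = complex_of_real (k 1 + k 2 + (real n + 1) / 2)" unfolding c_def
      by (simp add: algebra_simps)
    have W2: "W = twist_1m1 (Omod n a b c)" unfolding W_def a_def b_def c_def by simp
    have c1: "\<forall>j<n. Otheta n (-b) j \<noteq> Otheta n (-b) n"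
    proof (intro allI impI)
      fix j assume j: "j < n"
      show "Otheta n (-b) j \<noteq> Otheta n (-b) n"
        unfolding mb Otheta_real of_real_eq_iff using j kp assms(1)
        by (cases "even j") (simp_all add: minus_one_power_iff field_simps)
    qed
    have c2: "\<forall>j\<le>n. Otheta n (-b) j + (Otheta n (-b) n + 1) \<noteq> 0"
    proof (intro allI impI)
      fix j assume j: "j \<le> n"
      have "Otheta n (-b) j + (Otheta n (-b) n + 1) = complex_of_real ((-1)^j * (2*(k 1 + k 3 + (real n + 1) / 2) - real n + 2*real j)/2
           + ((-1)^n * (2*(k 1 + k 3 + (real n + 1) / 2) - real n + 2*real n)/2 + 1))"
        unfolding mb Otheta_real by simp
      moreover have "(-1)^j * (2*(k 1 + k 3 + (real n + 1) / 2) - real n + 2*real j)/2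
           + ((-1)^n * (2*(k 1 + k 3 + (real n + 1) / 2) - real n + 2*real n)/2 + 1) \<noteq> 0"
        using j kp assms(1) by (cases "even j") (simp_all add: minus_one_power_iff field_simps)
      ultimately show "Otheta n (-b) j + (Otheta n (-b) n + 1) \<noteq> 0" by (metis of_real_eq_0_iff)
    qed
    have pW: "\<forall>j. 1 \<le> j \<and> j \<le> n \<longrightarrow> Ophi n a b c j \<noteq> 0"
    proof (intro allI impI)
      fix j assume j: "1 \<le> j \<and> j \<le> n"
      have "Ophi n a b c j = br k 1 (Suc n - j) * br k 2 j"
        unfolding a_def b_def c_def using phW[OF assms(1), of j] j by (simp add: aW_def[OF assms(1)] bW_def[OF assms(1)] cW_def[OF assms(1)])
      moreover have "br k 1 (Suc n - j) \<noteq> 0"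
      proof -
        have m1: "1 \<le> Suc n - j" using j by (simp add: Suc_diff_le)
        show ?thesis using br_pos[of k 1 "Suc n - j", OF _ m1] kp by simp
      qed
      moreover have "br k 2 j \<noteq> 0" using br_pos[of k 2 j] kp j by simp
      ultimately show "Ophi n a b c j \<noteq> 0" by simp
    qed
    have pN: "\<forall>j. 1 \<le> j \<and> j \<le> n \<longrightarrow> Ophi n a (-b) (-c) j \<noteq> 0"
    proof (intro allI impI)
      fix j assume j: "1 \<le> j \<and> j \<le> n"
      have r: "(if even j then real j * (real n + 1 - 2 * real j - 2*(k 2 + k 3 + (real n + 1) / 2) - 2*(k 1 + k 3 + (real n + 1) / 2) - 2*(k 1 + k 2 + (real n + 1) / 2))/2
           else (real j - real n - 1) * (real n + 1 - 2 * real j - 2*(k 2 + k 3 + (real n + 1) / 2) - 2*(k 1 + k 3 + (real n + 1) / 2) + 2*(k 1 + k 2 + (real n + 1) / 2))/2) \<noteq> 0"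
      proof (cases "even j")
        case True
        have neg: "real j * (real n + 1 - 2 * real j - 2*(k 2 + k 3 + (real n + 1) / 2) - 2*(k 1 + k 3 + (real n + 1) / 2) - 2*(k 1 + k 2 + (real n + 1) / 2)) < 0"
          (is "?X < 0")
        proof (rule mult_pos_neg)
          show "0 < real j" using j by simp
          show "real n + 1 - 2 * real j - 2*(k 2 + k 3 + (real n + 1) / 2) - 2*(k 1 + k 3 + (real n + 1) / 2) - 2*(k 1 + k 2 + (real n + 1) / 2) < 0"
          proof -
            have "1 \<le> real j" "0 \<le> real n" "0 \<le> k 1" "0 \<le> k 2" "0 \<le> k 3" using j kp by auto
            then show ?thesis by (simp add: field_simps)
          qed
        qed
        have "?X / 2 < 0" using neg by (intro divide_neg_pos) auto
        then have "?X / 2 \<noteq> 0" by linarith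
        then show ?thesis unfolding if_P[OF True] .
      next
        case False
        have pos: "(real j - real n - 1) * (real n + 1 - 2 * real j - 2*(k 2 + k 3 + (real n + 1) / 2) - 2*(k 1 + k 3 + (real n + 1) / 2) + 2*(k 1 + k 2 + (real n + 1) / 2)) > 0"
          (is "?Y > 0")
        proof (rule mult_neg_neg)
          show "real j - real n - 1 < 0" using j by linarith
          show "real n + 1 - 2 * real j - 2*(k 2 + k 3 + (real n + 1) / 2) - 2*(k 1 + k 3 + (real n + 1) / 2) + 2*(k 1 + k 2 + (real n + 1) / 2) < 0"
          proof -
            have "1 \<le> real j" "0 \<le> real n" "0 \<le> k 1" "0 \<le> k 2" "0 \<le> k 3" using j kp by auto
            then show ?thesis by (simp add: field_simps)
          qed
        qed
        have "?Y / 2 > 0" using pos by (intro divide_pos_pos) auto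
        then have "?Y / 2 \<noteq> 0" by linarith
        then show ?thesis unfolding if_not_P[OF False] .
      qed
      show "Ophi n a (-b) (-c) j \<noteq> 0" unfolding a_def mb mc Ophi_real of_real_eq_0_iff by (rule r)
    qed
    have P: "bi_irreducible (twist_1m1 (Omod n a b c)) \<and> bi_iso (twist_1m1 (Omod n a b c)) (Omod n a (-b) (-c))"
      by (rule part2[OF assms(1) c1 c2 pW pN])
    show "bi_irreducible W \<and> bi_iso W (Omod n
             (complex_of_real (k 2 + k 3 + (real n + 1) / 2))
             (complex_of_real (k 1 + k 3 + (real n + 1) / 2))
             (complex_of_real (k 1 + k 2 + (real n + 1) / 2)))"
      using P unfolding W2 mb mc a_def by simp
  qed
qed

end
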